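(* Let $(\mathfrak C:A)$, $(\mathfrak D:B)$ be corings. Let $(\Sigma,\mathfrak s)$ and $(\widetilde\Sigma,\widetilde{\mathfrak s})$ be pairs, each consisting of a $(B,A)$-bimodule and a $(B,A)$-bilinear map $\mathfrak D\otimes_B\Sigma\to\Sigma\otimes_A\mathfrak C$ (resp. $\mathfrak D\otimes_B\widetilde\Sigma\to\widetilde\Sigma\otimes_A\mathfrak C$) satisfying $(\Sigma\otimes_A\varepsilon_{\mathfrak C})\circ\mathfrak s=\varepsilon_{\mathfrak D}\otimes_B\Sigma$ and $(\Sigma\otimes_A\Delta_{\mathfrak C})\circ\mathfrak s=(\mathfrak s\otimes_A\mathfrak C)\circ(\mathfrak D\otimes_B\mathfrak s)\circ(\Delta_{\mathfrak D}\otimes_B\Sigma)$ (and likewise for $\widetilde{\mathfrak s}$). Call a $2$-cell from $(\Sigma,\mathfrak s)$ to $(\widetilde\Sigma,\widetilde{\mathfrak s})$ a $(B,A)$-bilinear map $\mathfrak a:\mathfrak D\otimes_B\Sigma\to\widetilde\Sigma$ such that $(\mathfrak a\otimes_A\mathfrak C)\circ(\mathfrak D\otimes_B\mathfrak s)\circ(\Delta_{\mathfrak D}\otimes_B\Sigma)=\widetilde{\mathfrak s}\circ(\mathfrak D\otimes_B\mathfrak a)\circ(\Delta_{\mathfrak D}\otimes_B\Sigma)$. Regard $\mathfrak D\otimes_B\Sigma$ as a $(\mathfrak D,\mathfrak C)$-bicomodule with left coaction $\Delta_{\mathfrak D}\otimes_B\Sigma$ and right coaction $(\mathfrak D\otimes_B\mathfrak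 s)\circ(\Delta_{\mathfrak D}\otimes_B\Sigma)$, and similarly $\mathfrak D\otimes_B\widetilde\Sigma$. Then $\mathfrak a\mapsto(\mathfrak D\otimes_B\mathfrak a)\circ(\Delta_{\mathfrak D}\otimes_B\Sigma)$ is a bijection from the set of $2$-cells $(\Sigma,\mathfrak s)\to(\widetilde\Sigma,\widetilde{\mathfrak s})$ onto the set $\mathrm{Hom}^{\mathfrak D,\mathfrak C}(\mathfrak D\otimes_B\Sigma,\mathfrak D\otimes_B\widetilde\Sigma)$ of $(\mathfrak D,\mathfrak C)$-bicolinear maps, with inverse $f\mapsto(\varepsilon_{\mathfrak D}\otimes_B\widetilde\Sigma)\circ f$.
   Context: $k$ is a commutative ring; all algebras are unital associative $k$-algebras. An $A$-coring $(\mathfrak C:A)$ is an $A$-bimodule $\mathfrak C$ with coassociative comultiplication $\Delta_{\mathfrak C}:\mathfrak C\to\mathfrak C\otimes_A\mathfrak C$ and counit $\varepsilon_{\mathfrak C}:\mathfrak C\to A$, both $A$-bimodule maps. A $(\mathfrak D,\mathfrak C)$-bicomodule is a $(B,A)$-bimodule with a left $\mathfrak D$-comodule and right $\mathfrak C$-comodule structure whose coactions commute; bicolinear maps are maps colinear for both coactions. Identifications $B\otimes_B\Sigma\cong\Sigma\cong\Sigma\otimes_AA$ are used tacitly. *)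

theory Defs
  imports "HOL-Library.FuncSet"
begin

record ('b, 'm, 'a) bimod =
  bm_car :: "'m set"
  bm_zero :: 'm
  bm_plus :: "'m \<Rightarrow> 'm \<Rightarrow> 'm"
  bm_neg :: "'m \<Rightarrow> 'm"
  bm_lact :: "'b \<Rightarrow> 'm \<Rightarrow> 'm"
  bm_ract :: "'m \<Rightarrow> 'a \<Rightarrow> 'm"

definition bimodule :: "('b::ring_1, 'm, 'a::ring_1) bimod \<Rightarrow> bool" where
  "bimodule M \<longleftrightarrow>
     bm_zero M \<in> bm_car M
   \<and> (\<forall>x\<in>bm_car M. \<forall>y\<in>bm_car M. bm_plus M x y \<in> bm_car M)
   \<and> (\<forall>x\<in>bm_car M. bm_neg M x \<in> bm_car M)
   \<and> (\<forall>b. \<forall>x\<in>bm_car M. bm_lact M b x \<in> bm_car M)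
   \<and> (\<forall>a. \<forall>x\<in>bm_car M. bm_ract M x a \<in> bm_car M)
   \<and> (\<forall>x\<in>bm_car M. \<forall>y\<in>bm_car M. \<forall>z\<in>bm_car M.
        bm_plus M (bm_plus M x y) z = bm_plus M x (bm_plus M y z))
   \<and> (\<forall>x\<in>bm_car M. \<forall>y\<in>bm_car M. bm_plus M x y = bm_plus M y x)
   \<and> (\<forall>x\<in>bm_car M. bm_plus M (bm_zero M) x = x)
   \<and> (\<forall>x\<in>bm_car M. bm_plus M (bm_neg M x) x = bm_zero M)
   \<and> (\<forall>x\<in>bm_car M. bm_lact M 1 x = x)
   \<and> (\<forall>b b'. \<forall>x\<in>bm_car M. bm_lact M (b * b') x = bm_lact M b (bm_lact M b' x))
   \<and> (\<forall>b b'. \<forall>x\<in>bm_car M. bm_lact M (b + b') x = bm_plus M (bm_lact M b x) (bm_lact M b' x))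
   \<and> (\<forall>b. \<forall>x\<in>bm_car M. \<forall>y\<in>bm_car M.
        bm_lact M b (bm_plus M x y) = bm_plus M (bm_lact M b x) (bm_lact M b y))
   \<and> (\<forall>x\<in>bm_car M. bm_ract M x 1 = x)
   \<and> (\<forall>a a'. \<forall>x\<in>bm_car M. bm_ract M x (a * a') = bm_ract M (bm_ract M x a) a')
   \<and> (\<forall>a a'. \<forall>x\<in>bm_car M. bm_ract M x (a + a') = bm_plus M (bm_ract M x a) (bm_ract M x a'))
   \<and> (\<forall>a. \<forall>x\<in>bm_car M. \<forall>y\<in>bm_car M.
        bm_ract M (bm_plus M x y) a = bm_plus M (bm_ract M x a) (bm_ract M y a))
   \<and> (\<forall>a b. \<forall>x\<in>bm_car M. bm_ract M (bm_lact M b x) a = bm_lact M b (bm_ract M x a))"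

definition kalgebra :: "('k::comm_ring_1 \<Rightarrow> 'a::ring_1) \<Rightarrow> bool" where
  "kalgebra \<iota> \<longleftrightarrow> \<iota> 1 = 1 \<and> (\<forall>x y. \<iota> (x + y) = \<iota> x + \<iota> y)
     \<and> (\<forall>x y. \<iota> (x * y) = \<iota> x * \<iota> y) \<and> (\<forall>x a. \<iota> x * a = a * \<iota> x)"

definition kbimod :: "('k::comm_ring_1 \<Rightarrow> 'b::ring_1) \<Rightarrow> ('k \<Rightarrow> 'a::ring_1)
    \<Rightarrow> ('b, 'm, 'a) bimod \<Rightarrow> bool" where
  "kbimod \<iota>B \<iota>A M \<longleftrightarrow> bimodule M \<and>
     (\<forall>l. \<forall>x\<in>bm_car M. bm_lact M (\<iota>B l) x = bm_ract M x (\<iota>A l))"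

definition bimod_hom :: "('b, 'm, 'a) bimod \<Rightarrow> ('b, 'n, 'a) bimod \<Rightarrow> ('m \<Rightarrow> 'n) \<Rightarrow> bool" where
  "bimod_hom M N f \<longleftrightarrow>
     (\<forall>x\<in>bm_car M. f x \<in> bm_car N)
   \<and> (\<forall>x\<in>bm_car M. \<forall>y\<in>bm_car M. f (bm_plus M x y) = bm_plus N (f x) (f y))
   \<and> (\<forall>b. \<forall>x\<in>bm_car M. f (bm_lact M b x) = bm_lact N b (f x))
   \<and> (\<forall>a. \<forall>x\<in>bm_car M. f (bm_ract M x a) = bm_ract N (f x) a)"

definition ringmod :: "('a::ring_1, 'a, 'a) bimod" where
  "ringmod = \<lparr>bm_car = UNIV, bm_zero = 0, bm_plus = (+), bm_neg = uminus,
              bm_lact = (*), bm_ract = (*)\<rparr>"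

section \<open>Tensor products over a ring\<close>

text \<open>M \<otimes>_A N is the quotient of the free abelian group on (carrier M) \<times> (carrier N),
represented by finitely supported integer-valued functions, by the subgroup generated by
biadditivity and A-balancedness relations. Elements are equivalence classes.\<close>

type_synonym ('m, 'n) tns = "('m \<times> 'n \<Rightarrow> int) set"

definition fsums :: "('x, 'm, 'a) bimod \<Rightarrow> ('a, 'n, 'y) bimod \<Rightarrow> ('m \<times> 'n \<Rightarrow> int) set" where
  "fsums M N = {x. finite {p. x p \<noteq> 0} \<and> {p. x p \<noteq> 0} \<subseteq> bm_car M \<times> bm_car N}"

definition delta :: "'p \<Rightarrow> 'p \<Rightarrow> int" where
  "delta p = (\<lambda>q. if q = p then 1 else 0)"

inductive_set trel :: "('x, 'm, 'a) bimod \<Rightarrow> ('a, 'n, 'y) bimod \<Rightarrow> ('m \<times> 'n \<Rightarrow> int) set"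
  for M N where
  zero: "(\<lambda>_. 0) \<in> trel M N"
| addl: "\<lbrakk>m \<in> bm_car M; m' \<in> bm_car M; n \<in> bm_car N\<rbrakk> \<Longrightarrow>
     (\<lambda>q. delta (bm_plus M m m', n) q - delta (m, n) q - delta (m', n) q) \<in> trel M N"
| addr: "\<lbrakk>m \<in> bm_car M; n \<in> bm_car N; n' \<in> bm_car N\<rbrakk> \<Longrightarrow>
     (\<lambda>q. delta (m, bm_plus N n n') q - delta (m, n) q - delta (m, n') q) \<in> trel M N"
| bal: "\<lbrakk>m \<in> bm_car M; n \<in> bm_car N\<rbrakk> \<Longrightarrow>
     (\<lambda>q. delta (bm_ract M m a, n) q - delta (m, bm_lact N a n) q) \<in> trel M N"
| plus: "\<lbrakk>x \<in> trel M N; y \<in> trel M N\<rbrakk> \<Longrightarrow> (\<lambda>q. x q + y q) \<in> trel M N"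
| neg: "x \<in> trel M N \<Longrightarrow> (\<lambda>q. - x q) \<in> trel M N"

definition tcls :: "('x, 'm, 'a) bimod \<Rightarrow> ('a, 'n, 'y) bimod \<Rightarrow> ('m \<times> 'n \<Rightarrow> int) \<Rightarrow> ('m, 'n) tns" where
  "tcls M N x = {y \<in> fsums M N. (\<lambda>q. x q - y q) \<in> trel M N}"

definition rep :: "('p \<Rightarrow> int) set \<Rightarrow> 'p \<Rightarrow> int" where
  "rep t = (SOME x. x \<in> t)"

definition msum :: "('u, 'p, 'v) bimod \<Rightarrow> ('q \<Rightarrow> 'p) \<Rightarrow> 'q set \<Rightarrow> 'p" where
  "msum P f S = Finite_Set.fold (\<lambda>q acc. bm_plus P (f q) acc) (bm_zero P) S"

definition zmul :: "('u, 'p, 'v) bimod \<Rightarrow> int \<Rightarrow> 'p \<Rightarrow> 'p" where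
  "zmul P n x = (if 0 \<le> n then (bm_plus P x ^^ nat n) (bm_zero P)
                 else bm_neg P ((bm_plus P x ^^ nat (- n)) (bm_zero P)))"

text \<open>The additive map M \<otimes> N \<rightarrow> P induced by a (balanced, biadditive) function on M \<times> N.\<close>

definition lift :: "('u, 'p, 'v) bimod \<Rightarrow> ('m \<times> 'n \<Rightarrow> 'p) \<Rightarrow> ('m, 'n) tns \<Rightarrow> 'p" where
  "lift P \<phi> t = msum P (\<lambda>q. zmul P (rep t q) (\<phi> q)) {q. rep t q \<noteq> 0}"

definition tgrp :: "('x, 'm, 'a) bimod \<Rightarrow> ('a, 'n, 'y) bimod \<Rightarrow> ('u, ('m, 'n) tns, 'v) bimod" where
  "tgrp M N = \<lparr>bm_car = tcls M N ` fsums M N,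
               bm_zero = tcls M N (\<lambda>_. 0),
               bm_plus = (\<lambda>t u. tcls M N (\<lambda>q. rep t q + rep u q)),
               bm_neg = (\<lambda>t. tcls M N (\<lambda>q. - rep t q)),
               bm_lact = (\<lambda>_ _. undefined),
               bm_ract = (\<lambda>_ _. undefined)\<rparr>"

definition tel :: "('x, 'm, 'a) bimod \<Rightarrow> ('a, 'n, 'y) bimod \<Rightarrow> 'm \<Rightarrow> 'n \<Rightarrow> ('m, 'n) tns" where
  "tel M N m n = tcls M N (delta (m, n))"

definition tens :: "('x, 'm, 'a) bimod \<Rightarrow> ('a, 'n, 'y) bimod \<Rightarrow> ('x, ('m, 'n) tns, 'y) bimod" where
  "tens M N = \<lparr>bm_car = tcls M N ` fsums M N,
               bm_zero = tcls M N (\<lambda>_. 0),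
               bm_plus = (\<lambda>t u. tcls M N (\<lambda>q. rep t q + rep u q)),
               bm_neg = (\<lambda>t. tcls M N (\<lambda>q. - rep t q)),
               bm_lact = (\<lambda>b t. lift (tgrp M N :: (unit, _, unit) bimod)
                              (\<lambda>(m, n). tel M N (bm_lact M b m) n) t),
               bm_ract = (\<lambda>t a. lift (tgrp M N :: (unit, _, unit) bimod)
                              (\<lambda>(m, n). tel M N m (bm_ract N n a)) t)\<rparr>"

definition tmap :: "('x, 'm', 'a) bimod \<Rightarrow> ('a, 'n', 'y) bimod \<Rightarrow> ('m \<Rightarrow> 'm') \<Rightarrow> ('n \<Rightarrow> 'n')
    \<Rightarrow> ('m, 'n) tns \<Rightarrow> ('m', 'n') tns" where
  "tmap M' N' f g t = lift (tens M' N') (\<lambda>(m, n). tel M' N' (f m) (g n)) t"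

definition assocR :: "('x, 'm, 'a) bimod \<Rightarrow> ('a, 'n, 'b) bimod \<Rightarrow> ('b, 'p, 'y) bimod
    \<Rightarrow> (('m, 'n) tns, 'p) tns \<Rightarrow> ('m, ('n, 'p) tns) tns" where
  "assocR M N P t = lift (tens M (tens N P))
     (\<lambda>(u, p). lift (tens M (tens N P)) (\<lambda>(m, n). tel M (tens N P) m (tel N P n p)) u) t"

definition assocL :: "('x, 'm, 'a) bimod \<Rightarrow> ('a, 'n, 'b) bimod \<Rightarrow> ('b, 'p, 'y) bimod
    \<Rightarrow> ('m, ('n, 'p) tns) tns \<Rightarrow> (('m, 'n) tns, 'p) tns" where
  "assocL M N P t = lift (tens (tens M N) P)
     (\<lambda>(m, v). lift (tens (tens M N) P) (\<lambda>(n, p). tel (tens M N) P (tel M N m n) p) v) t"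

text \<open>For e : X \<rightarrow> B, the composite X \<otimes>_B M \<rightarrow> B \<otimes>_B M \<cong> M, and similarly on the right
(these are the tacit identifications B \<otimes>_B M \<cong> M \<cong> M \<otimes>_A A).\<close>

definition lact_by :: "('b, 'm, 'a) bimod \<Rightarrow> ('x \<Rightarrow> 'b) \<Rightarrow> ('x, 'm) tns \<Rightarrow> 'm" where
  "lact_by M e t = lift M (\<lambda>(x, m). bm_lact M (e x) m) t"

definition ract_by :: "('b, 'm, 'a) bimod \<Rightarrow> ('x \<Rightarrow> 'a) \<Rightarrow> ('m, 'x) tns \<Rightarrow> 'm" where
  "ract_by M e t = lift M (\<lambda>(m, x). bm_ract M m (e x)) t"

definition coring :: "('k::comm_ring_1 \<Rightarrow> 'a::ring_1) \<Rightarrow> ('a, 'c, 'a) bimod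
    \<Rightarrow> ('c \<Rightarrow> ('c, 'c) tns) \<Rightarrow> ('c \<Rightarrow> 'a) \<Rightarrow> bool" where
  "coring \<iota> C \<Delta> \<epsilon> \<longleftrightarrow> kbimod \<iota> \<iota> C
     \<and> bimod_hom C (tens C C) \<Delta>
     \<and> bimod_hom C ringmod \<epsilon>
     \<and> (\<forall>c\<in>bm_car C. tmap C (tens C C) id \<Delta> (\<Delta> c)
                      = assocR C C C (tmap (tens C C) C \<Delta> id (\<Delta> c)))
     \<and> (\<forall>c\<in>bm_car C. lact_by C \<epsilon> (\<Delta> c) = c)
     \<and> (\<forall>c\<in>bm_car C. ract_by C \<epsilon> (\<Delta> c) = c)"

definition coactL :: "('b, 'd, 'b) bimod \<Rightarrow> ('d \<Rightarrow> ('d, 'd) tns) \<Rightarrow> ('b, 's, 'a) bimod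
    \<Rightarrow> ('d, 's) tns \<Rightarrow> ('d, ('d, 's) tns) tns" where
  "coactL D \<Delta>D S x = assocR D D S (tmap (tens D D) S \<Delta>D id x)"

definition coactR :: "('b, 'd, 'b) bimod \<Rightarrow> ('d \<Rightarrow> ('d, 'd) tns) \<Rightarrow> ('b, 's, 'a) bimod
    \<Rightarrow> ('a, 'c, 'a) bimod \<Rightarrow> (('d, 's) tns \<Rightarrow> ('s, 'c) tns)
    \<Rightarrow> ('d, 's) tns \<Rightarrow> (('d, 's) tns, 'c) tns" where
  "coactR D \<Delta>D S C s x = assocL D S C (tmap D (tens S C) id s (coactL D \<Delta>D S x))"

definition onecell :: "('b, 'd, 'b) bimod \<Rightarrow> ('d \<Rightarrow> ('d, 'd) tns) \<Rightarrow> ('d \<Rightarrow> 'b)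
    \<Rightarrow> ('a, 'c, 'a) bimod \<Rightarrow> ('c \<Rightarrow> ('c, 'c) tns) \<Rightarrow> ('c \<Rightarrow> 'a)
    \<Rightarrow> ('b, 's, 'a) bimod \<Rightarrow> (('d, 's) tns \<Rightarrow> ('s, 'c) tns) \<Rightarrow> bool" where
  "onecell D \<Delta>D \<epsilon>D C \<Delta>C \<epsilon>C S s \<longleftrightarrow>
     bimod_hom (tens D S) (tens S C) s
   \<and> (\<forall>x\<in>bm_car (tens D S). ract_by S \<epsilon>C (s x) = lact_by S \<epsilon>D x)
   \<and> (\<forall>x\<in>bm_car (tens D S). tmap S (tens C C) id \<Delta>C (s x)
        = assocR S C C (tmap (tens S C) C s id (coactR D \<Delta>D S C s x)))"

definition twocells :: "('b, 'd, 'b) bimod \<Rightarrow> ('d \<Rightarrow> ('d, 'd) tns) \<Rightarrow> ('a, 'c, 'a) bimod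
    \<Rightarrow> ('b, 's, 'a) bimod \<Rightarrow> (('d, 's) tns \<Rightarrow> ('s, 'c) tns)
    \<Rightarrow> ('b, 't, 'a) bimod \<Rightarrow> (('d, 't) tns \<Rightarrow> ('t, 'c) tns)
    \<Rightarrow> (('d, 's) tns \<Rightarrow> 't) set" where
  "twocells D \<Delta>D C S s T t = {a. a \<in> extensional (bm_car (tens D S))
     \<and> bimod_hom (tens D S) T a
     \<and> (\<forall>x\<in>bm_car (tens D S).
          tmap T C a id (coactR D \<Delta>D S C s x) = t (tmap D T id a (coactL D \<Delta>D S x)))}"

definition bicolin :: "('b, 'd, 'b) bimod \<Rightarrow> ('d \<Rightarrow> ('d, 'd) tns) \<Rightarrow> ('a, 'c, 'a) bimod
    \<Rightarrow> ('b, 's, 'a) bimod \<Rightarrow> (('d, 's) tns \<Rightarrow> ('s, 'c) tns)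
    \<Rightarrow> ('b, 't, 'a) bimod \<Rightarrow> (('d, 't) tns \<Rightarrow> ('t, 'c) tns)
    \<Rightarrow> (('d, 's) tns \<Rightarrow> ('d, 't) tns) set" where
  "bicolin D \<Delta>D C S s T t = {f. f \<in> extensional (bm_car (tens D S))
     \<and> bimod_hom (tens D S) (tens D T) f
     \<and> (\<forall>x\<in>bm_car (tens D S). coactL D \<Delta>D T (f x) = tmap D (tens D T) id f (coactL D \<Delta>D S x))
     \<and> (\<forall>x\<in>bm_car (tens D S). coactR D \<Delta>D T C t (f x) = tmap (tens D T) C f id (coactR D \<Delta>D S C s x))}"

definition cellPhi :: "('b, 'd, 'b) bimod \<Rightarrow> ('d \<Rightarrow> ('d, 'd) tns) \<Rightarrow> ('b, 's, 'a) bimod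
    \<Rightarrow> ('b, 't, 'a) bimod \<Rightarrow> (('d, 's) tns \<Rightarrow> 't) \<Rightarrow> ('d, 's) tns \<Rightarrow> ('d, 't) tns" where
  "cellPhi D \<Delta>D S T a = restrict (\<lambda>x. tmap D T id a (coactL D \<Delta>D S x)) (bm_car (tens D S))"

definition cellPsi :: "('b, 'd, 'b) bimod \<Rightarrow> ('d \<Rightarrow> 'b) \<Rightarrow> ('b, 's, 'a) bimod
    \<Rightarrow> ('b, 't, 'a) bimod \<Rightarrow> (('d, 's) tns \<Rightarrow> ('d, 't) tns) \<Rightarrow> ('d, 's) tns \<Rightarrow> 't" where
  "cellPsi D \<epsilon>D S T f = restrict (\<lambda>x. lact_by T \<epsilon>D (f x)) (bm_car (tens D S))"

end

theory Submission
  imports Defs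
begin

definition abgrp :: "('u, 'p, 'v) bimod \<Rightarrow> bool" where
  "abgrp P \<longleftrightarrow> bm_zero P \<in> bm_car P
   \<and> (\<forall>x\<in>bm_car P. \<forall>y\<in>bm_car P. bm_plus P x y \<in> bm_car P)
   \<and> (\<forall>x\<in>bm_car P. bm_neg P x \<in> bm_car P)
   \<and> (\<forall>x\<in>bm_car P. \<forall>y\<in>bm_car P. \<forall>z\<in>bm_car P.
        bm_plus P (bm_plus P x y) z = bm_plus P x (bm_plus P y z))
   \<and> (\<forall>x\<in>bm_car P. \<forall>y\<in>bm_car P. bm_plus P x y = bm_plus P y x)
   \<and> (\<forall>x\<in>bm_car P. bm_plus P (bm_zero P) x = x)
   \<and> (\<forall>x\<in>bm_car P. bm_plus P (bm_neg P x) x = bm_zero P)"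

lemma bimodule_abgrp: "bimodule M \<Longrightarrow> abgrp M"
  unfolding bimodule_def abgrp_def by (elim conjE) (intro conjI; assumption)

context
  fixes P :: "('u, 'p, 'v) bimod"
  assumes G: "abgrp P"
begin

lemma ag_zero[simp]: "bm_zero P \<in> bm_car P"
  using G unfolding abgrp_def by blast
lemma ag_plus[simp]: "x \<in> bm_car P \<Longrightarrow> y \<in> bm_car P \<Longrightarrow> bm_plus P x y \<in> bm_car P"
  using G unfolding abgrp_def by blast
lemma ag_neg[simp]: "x \<in> bm_car P \<Longrightarrow> bm_neg P x \<in> bm_car P"
  using G unfolding abgrp_def by blast
lemma ag_assoc: "x \<in> bm_car P \<Longrightarrow> y \<in> bm_car P \<Longrightarrow> z \<in> bm_car P \<Longrightarrow>
   bm_plus P (bm_plus P x y) z = bm_plus P x (bm_plus P y z)"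
  using G unfolding abgrp_def by blast
lemma ag_comm: "x \<in> bm_car P \<Longrightarrow> y \<in> bm_car P \<Longrightarrow> bm_plus P x y = bm_plus P y x"
  using G unfolding abgrp_def by blast
lemma ag_zl[simp]: "x \<in> bm_car P \<Longrightarrow> bm_plus P (bm_zero P) x = x"
  using G unfolding abgrp_def by blast
lemma ag_negl[simp]: "x \<in> bm_car P \<Longrightarrow> bm_plus P (bm_neg P x) x = bm_zero P"
  using G unfolding abgrp_def by blast
lemma ag_zr[simp]: "x \<in> bm_car P \<Longrightarrow> bm_plus P x (bm_zero P) = x"
  using ag_comm ag_zl by (metis ag_zero)
lemma ag_negr[simp]: "x \<in> bm_car P \<Longrightarrow> bm_plus P x (bm_neg P x) = bm_zero P"
  using ag_comm ag_negl by (metis ag_neg)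
lemma ag_lcomm: "x \<in> bm_car P \<Longrightarrow> y \<in> bm_car P \<Longrightarrow> z \<in> bm_car P \<Longrightarrow>
   bm_plus P x (bm_plus P y z) = bm_plus P y (bm_plus P x z)"
  by (metis ag_assoc ag_comm)
lemma ag_cancel:
  assumes "x \<in> bm_car P" "y \<in> bm_car P" "z \<in> bm_car P" "bm_plus P x y = bm_plus P x z"
  shows "y = z"
proof -
  have "bm_plus P (bm_neg P x) (bm_plus P x y) = bm_plus P (bm_neg P x) (bm_plus P x z)"
    using assms(4) by simp
  also have "bm_plus P (bm_neg P x) (bm_plus P x y) = y"
    using assms(1,2) by (simp add: ag_assoc[symmetric])
  also have "bm_plus P (bm_neg P x) (bm_plus P x z) = z"
    using assms(1,3) by (simp add: ag_assoc[symmetric])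
  finally show ?thesis .
qed
lemma ag_neg_unique:
  assumes "a \<in> bm_car P" "b \<in> bm_car P" "bm_plus P a b = bm_zero P"
  shows "a = bm_neg P b"
  using ag_cancel[of b a "bm_neg P b"] assms by (simp add: ag_comm)
lemma ag_idem_zero:
  assumes "x \<in> bm_car P" "bm_plus P x x = x" shows "x = bm_zero P"
  using ag_cancel[of x x "bm_zero P"] assms by simp
lemma ag_swap4: "a \<in> bm_car P \<Longrightarrow> b \<in> bm_car P \<Longrightarrow> c \<in> bm_car P \<Longrightarrow> d \<in> bm_car P \<Longrightarrow>
  bm_plus P (bm_plus P a b) (bm_plus P c d) = bm_plus P (bm_plus P a c) (bm_plus P b d)"
  by (simp add: ag_assoc ag_lcomm[of b c d])
lemma ag_cl1[simp]: "x \<in> bm_car P \<Longrightarrow> w \<in> bm_car P \<Longrightarrow> bm_plus P x (bm_plus P (bm_neg P x) w) = w"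
  by (simp add: ag_assoc[symmetric])
lemma ag_cl2[simp]: "x \<in> bm_car P \<Longrightarrow> w \<in> bm_car P \<Longrightarrow> bm_plus P (bm_neg P x) (bm_plus P x w) = w"
  by (simp add: ag_assoc[symmetric])
lemma ag_neg_zero[simp]: "bm_neg P (bm_zero P) = bm_zero P"
  by (metis ag_negl ag_neg ag_zero ag_zr)
lemma ag_neg_plus: "x \<in> bm_car P \<Longrightarrow> y \<in> bm_car P \<Longrightarrow>
   bm_neg P (bm_plus P x y) = bm_plus P (bm_neg P x) (bm_neg P y)"
  apply (rule ag_neg_unique[symmetric])
    apply simp_all
  apply (simp add: ag_swap4)
  done

end

definition addhom :: "('u, 'm, 'v) bimod \<Rightarrow> ('u2, 'n, 'v2) bimod \<Rightarrow> ('m \<Rightarrow> 'n) \<Rightarrow> bool" where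
  "addhom M N f \<longleftrightarrow> (\<forall>x\<in>bm_car M. f x \<in> bm_car N)
     \<and> (\<forall>x\<in>bm_car M. \<forall>y\<in>bm_car M. f (bm_plus M x y) = bm_plus N (f x) (f y))"

definition llin :: "('b, 'm, 'v) bimod \<Rightarrow> ('b, 'n, 'v2) bimod \<Rightarrow> ('m \<Rightarrow> 'n) \<Rightarrow> bool" where
  "llin M N f \<longleftrightarrow> (\<forall>b. \<forall>x\<in>bm_car M. f (bm_lact M b x) = bm_lact N b (f x))"

definition rlin :: "('u, 'm, 'a) bimod \<Rightarrow> ('u2, 'n, 'a) bimod \<Rightarrow> ('m \<Rightarrow> 'n) \<Rightarrow> bool" where
  "rlin M N f \<longleftrightarrow> (\<forall>a. \<forall>x\<in>bm_car M. f (bm_ract M x a) = bm_ract N (f x) a)"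

lemma addhomD1: "addhom M N f \<Longrightarrow> x \<in> bm_car M \<Longrightarrow> f x \<in> bm_car N"
  unfolding addhom_def by blast
lemma addhomD2: "addhom M N f \<Longrightarrow> x \<in> bm_car M \<Longrightarrow> y \<in> bm_car M \<Longrightarrow>
   f (bm_plus M x y) = bm_plus N (f x) (f y)"
  unfolding addhom_def by blast
lemma addhomI: "(\<And>x. x \<in> bm_car M \<Longrightarrow> f x \<in> bm_car N) \<Longrightarrow>
  (\<And>x y. x \<in> bm_car M \<Longrightarrow> y \<in> bm_car M \<Longrightarrow> f (bm_plus M x y) = bm_plus N (f x) (f y))
  \<Longrightarrow> addhom M N f"
  unfolding addhom_def by blast
lemma llinD: "llin M N f \<Longrightarrow> x \<in> bm_car M \<Longrightarrow> f (bm_lact M b x) = bm_lact N b (f x)"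
  unfolding llin_def by blast
lemma rlinD: "rlin M N f \<Longrightarrow> x \<in> bm_car M \<Longrightarrow> f (bm_ract M x a) = bm_ract N (f x) a"
  unfolding rlin_def by blast

lemma addhom_comp: "addhom M N f \<Longrightarrow> addhom N P g \<Longrightarrow> addhom M P (\<lambda>x. g (f x))"
  unfolding addhom_def by simp
lemma llin_comp: "addhom M N f \<Longrightarrow> llin M N f \<Longrightarrow> llin N P g \<Longrightarrow> llin M P (\<lambda>x. g (f x))"
  unfolding addhom_def llin_def by simp
lemma rlin_comp: "addhom M N f \<Longrightarrow> rlin M N f \<Longrightarrow> rlin N P g \<Longrightarrow> rlin M P (\<lambda>x. g (f x))"
  unfolding addhom_def rlin_def by simp
lemma addhom_id: "addhom M M (\<lambda>x. x)" unfolding addhom_def by simp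
lemma llin_id: "llin M M (\<lambda>x. x)" unfolding llin_def by simp
lemma rlin_id: "rlin M M (\<lambda>x. x)" unfolding rlin_def by simp

lemma bimod_hom_iff: "bimod_hom M N f \<longleftrightarrow> addhom M N f \<and> llin M N f \<and> rlin M N f"
  unfolding bimod_hom_def addhom_def llin_def rlin_def by blast

lemma addhom_zero: "abgrp M \<Longrightarrow> abgrp N \<Longrightarrow> addhom M N f \<Longrightarrow> f (bm_zero M) = bm_zero N"
  by (metis addhomD1 addhomD2 ag_idem_zero ag_zero ag_zl)

lemma addhom_neg: "abgrp M \<Longrightarrow> abgrp N \<Longrightarrow> addhom M N f \<Longrightarrow> x \<in> bm_car M \<Longrightarrow>
   f (bm_neg M x) = bm_neg N (f x)"
  apply (rule ag_neg_unique, assumption)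
  apply (auto intro: addhomD1)
  apply (metis addhomD2 addhom_zero ag_negl ag_neg)
  done


lemma msum_cong: "(\<And>q. q \<in> S \<Longrightarrow> h q = h' q) \<Longrightarrow> msum P h S = msum P h' S"
  unfolding msum_def by (rule fold_closed_eq[where B=UNIV]) auto

context
  fixes P :: "('u, 'p, 'v) bimod"
  assumes G: "abgrp P"
begin

definition gstep :: "('q \<Rightarrow> 'p) \<Rightarrow> 'q \<Rightarrow> 'p \<Rightarrow> 'p" where
  "gstep h q acc = (if acc \<in> bm_car P then bm_plus P (h q) acc else acc)"

lemma msum_alt: "(\<And>q. q \<in> S \<Longrightarrow> h q \<in> bm_car P) \<Longrightarrow>
  msum P h S = Finite_Set.fold (gstep h) (bm_zero P) S"
  unfolding msum_def
  by (rule fold_closed_eq[where B="bm_car P"]) (auto simp: gstep_def G)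

lemma gstep_cfc: "(\<And>q. q \<in> S \<Longrightarrow> h q \<in> bm_car P) \<Longrightarrow> comp_fun_commute_on S (gstep h)"
  unfolding comp_fun_commute_on_def
  by (auto simp: gstep_def fun_eq_iff G ag_lcomm)

lemma msum_empty[simp]: "msum P h {} = bm_zero P"
  unfolding msum_def by simp

lemma msum_insert:
  assumes "finite S" "q \<notin> S" "h q \<in> bm_car P" "\<And>p. p \<in> S \<Longrightarrow> h p \<in> bm_car P"
  shows "msum P h (insert q S) = bm_plus P (h q) (msum P h S)"
proof -
  have hc: "\<And>p. p \<in> insert q S \<Longrightarrow> h p \<in> bm_car P" using assms by auto
  interpret comp_fun_commute_on "insert q S" "gstep h" by (rule gstep_cfc[OF hc])
  have "Finite_Set.fold (gstep h) (bm_zero P) (insert q S) = gstep h q (Finite_Set.fold (gstep h) (bm_zero P) S)"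
    by (rule fold_insert) (use assms in auto)
  note fi = this
  have "msum P h (insert q S) = gstep h q (Finite_Set.fold (gstep h) (bm_zero P) S)"
    apply (subst msum_alt[of "insert q S" h])
    using hc fi by auto
  moreover have "msum P h S = Finite_Set.fold (gstep h) (bm_zero P) S"
    by (rule msum_alt) (use assms(4) in auto)
  moreover have "msum P h S \<in> bm_car P"
  proof -
    have "\<And>T. finite T \<Longrightarrow> T \<subseteq> S \<Longrightarrow> msum P h T \<in> bm_car P"
    proof -
      fix T assume "finite T" "T \<subseteq> S"
      then show "msum P h T \<in> bm_car P"
      proof (induction T rule: finite_induct)
        case empty then show ?case by (simp add: G)
      next
        case (insert x F)
        have hc2: "\<And>p. p \<in> insert x F \<Longrightarrow> h p \<in> bm_car P" using insert assms by auto
        interpret F2: comp_fun_commute_on "insert x F" "gstep h" by (rule gstep_cfc[OF hc2])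
        have "Finite_Set.fold (gstep h) (bm_zero P) (insert x F) = gstep h x (Finite_Set.fold (gstep h) (bm_zero P) F)"
          by (rule F2.fold_insert) (use insert in auto)
        note fi2 = this
        have "msum P h (insert x F) = gstep h x (Finite_Set.fold (gstep h) (bm_zero P) F)"
          apply (subst msum_alt[of "insert x F" h])
          using hc2 fi2 by auto
        moreover have "Finite_Set.fold (gstep h) (bm_zero P) F = msum P h F"
          by (rule msum_alt[symmetric]) (use hc2 in auto)
        ultimately show ?case using insert hc2 by (simp add: gstep_def G)
      qed
    qed
    then show ?thesis using assms by blast
  qed
  ultimately show ?thesis by (simp add: gstep_def)
qed

lemma msum_car: "finite S \<Longrightarrow> (\<And>p. p \<in> S \<Longrightarrow> h p \<in> bm_car P) \<Longrightarrow> msum P h S \<in> bm_car P"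
proof (induction S rule: finite_induct)
  case empty then show ?case by (simp add: G)
next
  case (insert x F) then show ?case by (simp add: msum_insert G)
qed

lemma msum_add: "finite S \<Longrightarrow> (\<And>p. p \<in> S \<Longrightarrow> h1 p \<in> bm_car P) \<Longrightarrow> (\<And>p. p \<in> S \<Longrightarrow> h2 p \<in> bm_car P) \<Longrightarrow>
  msum P (\<lambda>q. bm_plus P (h1 q) (h2 q)) S = bm_plus P (msum P h1 S) (msum P h2 S)"
proof (induction S rule: finite_induct)
  case empty then show ?case by (simp add: G)
next
  case (insert x F)
  then show ?case
    by (simp add: msum_insert G msum_car ag_swap4)
qed

lemma msum_zero_ext:
  assumes "finite S'" "S \<subseteq> S'" "\<And>q. q \<in> S' - S \<Longrightarrow> h q = bm_zero P"
    "\<And>q. q \<in> S \<Longrightarrow> h q \<in> bm_car P"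
  shows "msum P h S' = msum P h S"
proof -
  have "\<And>R. finite R \<Longrightarrow> R \<subseteq> S' - S \<Longrightarrow> msum P h (S \<union> R) = msum P h S"
  proof -
    fix R assume "finite R" "R \<subseteq> S' - S"
    then show "msum P h (S \<union> R) = msum P h S"
    proof (induction R rule: finite_induct)
      case empty then show ?case by simp
    next
      case (insert x F)
      have fin: "finite (S \<union> F)" using assms insert finite_subset by blast
      have "S \<union> insert x F = insert x (S \<union> F)" by auto
      moreover have "x \<notin> S \<union> F" using insert by auto
      moreover have "h x = bm_zero P" using insert assms by auto
      moreover have "\<And>p. p \<in> S \<union> F \<Longrightarrow> h p \<in> bm_car P" using insert assms by (auto simp: G)
      ultimately have "msum P h (S \<union> insert x F) = bm_plus P (bm_zero P) (msum P h (S \<union> F))"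
        using msum_insert[OF fin, of x h] by (simp add: G)
      moreover have "msum P h S \<in> bm_car P" by (rule msum_car) (use assms fin in auto)
      ultimately show ?case using insert by (simp add: G)
    qed
  qed
  from this[of "S' - S"] assms show ?thesis
    by (metis Diff_partition finite_Diff order_refl)
qed

definition zit :: "'p \<Rightarrow> nat \<Rightarrow> 'p" where
  "zit v k = (bm_plus P v ^^ k) (bm_zero P)"

lemma zit_car: "v \<in> bm_car P \<Longrightarrow> zit v k \<in> bm_car P"
  by (induction k) (simp_all add: zit_def G)

lemma zit_Suc: "zit v (Suc k) = bm_plus P v (zit v k)"
  by (simp add: zit_def)

lemma zmul_zit: "zmul P n v = (if 0 \<le> n then zit v (nat n) else bm_neg P (zit v (nat (-n))))"
  by (simp add: zmul_def zit_def)

lemma zmul_car: "v \<in> bm_car P \<Longrightarrow> zmul P n v \<in> bm_car P"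
  by (simp add: zmul_zit zit_car G)

lemma zmul_0[simp]: "zmul P 0 v = bm_zero P"
  by (simp add: zmul_zit zit_def)

lemma zmul_1: "v \<in> bm_car P \<Longrightarrow> zmul P 1 v = v"
  by (simp add: zmul_zit zit_def G)

lemma zmul_succ: assumes v: "v \<in> bm_car P" shows "zmul P (n + 1) v = bm_plus P v (zmul P n v)"
proof (cases "0 \<le> n")
  case True
  then have "nat (n + 1) = Suc (nat n)" by simp
  then show ?thesis using True by (simp add: zmul_zit zit_Suc)
next
  case False
  define k where "k = nat (- n) - 1"
  have k: "nat (-n) = Suc k" using False k_def by simp
  have "zmul P n v = bm_neg P (bm_plus P v (zit v k))" using False k by (simp add: zmul_zit zit_Suc)
  also have "\<dots> = bm_plus P (bm_neg P v) (bm_neg P (zit v k))"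
    by (simp add: ag_neg_plus G zit_car \<open>v \<in> bm_car P\<close>)
  finally have zn: "zmul P n v = bm_plus P (bm_neg P v) (bm_neg P (zit v k))" .
  have "zmul P (n + 1) v = bm_neg P (zit v k)"
  proof (cases "n = -1")
    case True
    then have "k = 0" using k by simp
    then show ?thesis using True
      by (simp add: zmul_zit zit_def G)
  next
    case False2: False
    then have "\<not> 0 \<le> n + 1" "nat (- (n+1)) = k" using False k by auto
    then show ?thesis by (simp add: zmul_zit)
  qed
  then show ?thesis using zn v
    by (simp add: G zit_car)
qed

lemma zmul_pred: "v \<in> bm_car P \<Longrightarrow> zmul P (n - 1) v = bm_plus P (bm_neg P v) (zmul P n v)"
  using zmul_succ[of v "n - 1"]
  by (simp add: G zmul_car)

lemma zmul_add: assumes v: "v \<in> bm_car P" shows "zmul P (n + m) v = bm_plus P (zmul P n v) (zmul P m v)"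
proof (induction m rule: int_induct[where k=0])
  case base then show ?case using v by (simp add: G zmul_car)
next
  case (step1 i)
  have "zmul P (n + (i + 1)) v = zmul P ((n + i) + 1) v" by (simp add: add.assoc)
  also have "\<dots> = bm_plus P v (zmul P (n + i) v)" by (rule zmul_succ[OF v])
  also have "\<dots> = bm_plus P v (bm_plus P (zmul P n v) (zmul P i v))" using step1 by simp
  also have "\<dots> = bm_plus P (zmul P n v) (bm_plus P v (zmul P i v))"
    by (rule ag_lcomm[OF G]) (simp_all add: v zmul_car)
  also have "bm_plus P v (zmul P i v) = zmul P (i + 1) v" by (rule zmul_succ[OF v, symmetric])
  finally show ?case .
next
  case (step2 i)
  have "zmul P (n + (i - 1)) v = zmul P ((n + i) - 1) v" by (simp add: algebra_simps)
  also have "\<dots> = bm_plus P (bm_neg P v) (zmul P (n + i) v)" by (rule zmul_pred[OF v])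
  also have "\<dots> = bm_plus P (bm_neg P v) (bm_plus P (zmul P n v) (zmul P i v))" using step2 by simp
  also have "\<dots> = bm_plus P (zmul P n v) (bm_plus P (bm_neg P v) (zmul P i v))"
    by (rule ag_lcomm[OF G]) (simp_all add: v zmul_car G)
  also have "bm_plus P (bm_neg P v) (zmul P i v) = zmul P (i - 1) v" by (rule zmul_pred[OF v, symmetric])
  finally show ?case .
qed

end

definition ssum :: "('u, 'p, 'v) bimod \<Rightarrow> ('q \<Rightarrow> 'p) \<Rightarrow> ('q \<Rightarrow> int) \<Rightarrow> 'p" where
  "ssum P \<phi> x = msum P (\<lambda>q. zmul P (x q) (\<phi> q)) {q. x q \<noteq> 0}"

definition okx :: "('u, 'p, 'v) bimod \<Rightarrow> ('q \<Rightarrow> 'p) \<Rightarrow> ('q \<Rightarrow> int) \<Rightarrow> bool" where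
  "okx P \<phi> x \<longleftrightarrow> finite {q. x q \<noteq> 0} \<and> (\<forall>q. x q \<noteq> 0 \<longrightarrow> \<phi> q \<in> bm_car P)"

lemma lift_ssum: "lift P \<phi> t = ssum P \<phi> (rep t)"
  by (simp add: lift_def ssum_def)

context
  fixes P :: "('u, 'p, 'v) bimod"
  assumes G: "abgrp P"
begin

lemma ssum_ext:
  assumes "finite U" "{q. x q \<noteq> 0} \<subseteq> U" "\<And>q. q \<in> U \<Longrightarrow> \<phi> q \<in> bm_car P"
  shows "ssum P \<phi> x = msum P (\<lambda>q. zmul P (x q) (\<phi> q)) U"
  unfolding ssum_def
  by (rule msum_zero_ext[OF G, symmetric]) (use assms in \<open>auto simp: zmul_car[OF G] G\<close>)

lemma ssum_car: "okx P \<phi> x \<Longrightarrow> ssum P \<phi> x \<in> bm_car P"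
  unfolding ssum_def okx_def by (rule msum_car[OF G]) (auto simp: zmul_car[OF G])

lemma ssum_add:
  assumes "okx P \<phi> x" "okx P \<phi> y"
  shows "ssum P \<phi> (\<lambda>q. x q + y q) = bm_plus P (ssum P \<phi> x) (ssum P \<phi> y)"
proof -
  define U where "U = {q. x q \<noteq> 0} \<union> {q. y q \<noteq> 0}"
  have U: "finite U" "\<And>q. q \<in> U \<Longrightarrow> \<phi> q \<in> bm_car P"
    using assms unfolding U_def okx_def by auto
  have "ssum P \<phi> (\<lambda>q. x q + y q) = msum P (\<lambda>q. zmul P (x q + y q) (\<phi> q)) U"
    by (rule ssum_ext[OF U(1) _ U(2)]) (auto simp: U_def)
  also have "\<dots> = msum P (\<lambda>q. bm_plus P (zmul P (x q) (\<phi> q)) (zmul P (y q) (\<phi> q))) U"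
    by (rule msum_cong) (simp add: zmul_add[OF G] U(2))
  also have "\<dots> = bm_plus P (msum P (\<lambda>q. zmul P (x q) (\<phi> q)) U) (msum P (\<lambda>q. zmul P (y q) (\<phi> q)) U)"
    by (rule msum_add[OF G U(1)]) (simp_all add: zmul_car[OF G] U(2))
  also have "msum P (\<lambda>q. zmul P (x q) (\<phi> q)) U = ssum P \<phi> x"
    by (rule ssum_ext[OF U(1) _ U(2), symmetric]) (auto simp: U_def)
  also have "msum P (\<lambda>q. zmul P (y q) (\<phi> q)) U = ssum P \<phi> y"
    by (rule ssum_ext[OF U(1) _ U(2), symmetric]) (auto simp: U_def)
  finally show ?thesis .
qed

lemma ssum_zero: "ssum P \<phi> (\<lambda>_. 0) = bm_zero P"
  by (simp add: ssum_def G)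

lemma okx_add: "okx P \<phi> x \<Longrightarrow> okx P \<phi> y \<Longrightarrow> okx P \<phi> (\<lambda>q. x q + y q)"
proof -
  assume a: "okx P \<phi> x" "okx P \<phi> y"
  have s: "{q. x q + y q \<noteq> 0} \<subseteq> {q. x q \<noteq> 0} \<union> {q. y q \<noteq> 0}" by auto
  have f1: "finite {q. x q \<noteq> 0}" "finite {q. y q \<noteq> 0}" using a unfolding okx_def by auto
  have "finite {q. x q + y q \<noteq> 0}" by (rule finite_subset[OF s]) (simp add: f1)
  moreover have "\<forall>q. x q + y q \<noteq> 0 \<longrightarrow> \<phi> q \<in> bm_car P"
    using a unfolding okx_def by (metis add.left_neutral)
  ultimately show ?thesis unfolding okx_def by blast
qed

lemma okx_neg: "okx P \<phi> x \<Longrightarrow> okx P \<phi> (\<lambda>q. - x q)"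
  unfolding okx_def by auto

lemma ssum_neg:
  assumes "okx P \<phi> x"
  shows "ssum P \<phi> (\<lambda>q. - x q) = bm_neg P (ssum P \<phi> x)"
proof (rule ag_neg_unique[OF G])
  show "ssum P \<phi> (\<lambda>q. - x q) \<in> bm_car P" by (rule ssum_car[OF okx_neg[OF assms]])
  show "ssum P \<phi> x \<in> bm_car P" by (rule ssum_car[OF assms])
  have "bm_plus P (ssum P \<phi> (\<lambda>q. - x q)) (ssum P \<phi> x) = ssum P \<phi> (\<lambda>q. - x q + x q)"
    by (rule ssum_add[OF okx_neg[OF assms] assms, symmetric])
  also have "\<dots> = bm_zero P" by (simp add: ssum_zero)
  finally show "bm_plus P (ssum P \<phi> (\<lambda>q. - x q)) (ssum P \<phi> x) = bm_zero P" .
qed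

lemma ssum_diff:
  assumes "okx P \<phi> x" "okx P \<phi> y"
  shows "ssum P \<phi> (\<lambda>q. x q - y q) = bm_plus P (ssum P \<phi> x) (bm_neg P (ssum P \<phi> y))"
proof -
  have "ssum P \<phi> (\<lambda>q. x q - y q) = ssum P \<phi> (\<lambda>q. x q + (\<lambda>q. - y q) q)" by simp
  also have "\<dots> = bm_plus P (ssum P \<phi> x) (ssum P \<phi> (\<lambda>q. - y q))"
    by (rule ssum_add[OF assms(1) okx_neg[OF assms(2)]])
  finally show ?thesis by (simp add: ssum_neg[OF assms(2)])
qed

lemma ssum_delta: "\<phi> p \<in> bm_car P \<Longrightarrow> ssum P \<phi> (delta p) = \<phi> p"
proof -
  assume a: "\<phi> p \<in> bm_car P"
  have "{q. delta p q \<noteq> 0} = {p}" by (auto simp: delta_def)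
  then show ?thesis using a
    by (simp add: ssum_def delta_def msum_insert[OF G] zmul_1[OF G] G)
qed

lemma okx_delta: "\<phi> p \<in> bm_car P \<Longrightarrow> okx P \<phi> (delta p)"
  unfolding okx_def delta_def by auto

end

section \<open>The quotient construction\<close>

lemma fsums_iff: "x \<in> fsums M N \<longleftrightarrow> finite {p. x p \<noteq> 0} \<and> {p. x p \<noteq> 0} \<subseteq> bm_car M \<times> bm_car N"
  by (simp add: fsums_def)

lemma fsums_add: "x \<in> fsums M N \<Longrightarrow> y \<in> fsums M N \<Longrightarrow> (\<lambda>q. x q + y q) \<in> fsums M N"
proof -
  assume a: "x \<in> fsums M N" "y \<in> fsums M N"
  have s: "{q. x q + y q \<noteq> 0} \<subseteq> {q. x q \<noteq> 0} \<union> {q. y q \<noteq> 0}" by auto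
  have f1: "finite {q. x q \<noteq> 0}" "finite {q. y q \<noteq> 0}" using a unfolding fsums_iff by auto
  have "finite {q. x q + y q \<noteq> 0}" by (rule finite_subset[OF s]) (simp add: f1)
  moreover have "{q. x q + y q \<noteq> 0} \<subseteq> bm_car M \<times> bm_car N"
    using s a unfolding fsums_iff by blast
  ultimately show ?thesis unfolding fsums_iff by blast
qed

lemma fsums_neg: "x \<in> fsums M N \<Longrightarrow> (\<lambda>q. - x q) \<in> fsums M N"
  unfolding fsums_iff by auto

lemma fsums_diff: "x \<in> fsums M N \<Longrightarrow> y \<in> fsums M N \<Longrightarrow> (\<lambda>q. x q - y q) \<in> fsums M N"
  using fsums_add[OF _ fsums_neg, of x M N y] by simp

lemma fsums_zero: "(\<lambda>_. 0) \<in> fsums M N"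
  unfolding fsums_iff by auto

lemma fsums_delta: "m \<in> bm_car M \<Longrightarrow> n \<in> bm_car N \<Longrightarrow> delta (m, n) \<in> fsums M N"
  unfolding fsums_iff delta_def by auto

lemma bm_lact_car: "bimodule M \<Longrightarrow> x \<in> bm_car M \<Longrightarrow> bm_lact M b x \<in> bm_car M"
  unfolding bimodule_def by (elim conjE) (drule bspec, assumption, simp)
lemma bm_ract_car: "bimodule M \<Longrightarrow> x \<in> bm_car M \<Longrightarrow> bm_ract M x a \<in> bm_car M"
  unfolding bimodule_def apply (elim conjE) 
  apply (rotate_tac 4) apply (drule spec[of _ a]) by (drule bspec, assumption, simp)

lemma trel_fsums:
  assumes M: "bimodule M" and N: "bimodule N"
  shows "x \<in> trel M N \<Longrightarrow> x \<in> fsums M N"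
proof (induction rule: trel.induct)
  case zero then show ?case by (rule fsums_zero)
next
  case (addl m m' n)
  have mm: "bm_plus M m m' \<in> bm_car M" by (rule ag_plus[OF bimodule_abgrp[OF M] addl(1,2)])
  show ?case
    by (rule fsums_diff[OF fsums_diff[OF fsums_delta[OF mm addl(3)] fsums_delta[OF addl(1,3)]]
         fsums_delta[OF addl(2,3)]])
next
  case (addr m n n')
  have nn: "bm_plus N n n' \<in> bm_car N" by (rule ag_plus[OF bimodule_abgrp[OF N] addr(2,3)])
  show ?case
    by (rule fsums_diff[OF fsums_diff[OF fsums_delta[OF addr(1) nn] fsums_delta[OF addr(1,2)]]
         fsums_delta[OF addr(1,3)]])
next
  case (bal m n a)
  show ?case
    by (rule fsums_diff[OF fsums_delta[OF bm_ract_car[OF M bal(1)] bal(2)]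
          fsums_delta[OF bal(1) bm_lact_car[OF N bal(2)]]])
next
  case (plus x y) show ?case by (rule fsums_add[OF plus.IH])
next
  case (neg x) show ?case by (rule fsums_neg[OF neg.IH])
qed

lemma trel_diff: "x \<in> trel M N \<Longrightarrow> y \<in> trel M N \<Longrightarrow> (\<lambda>q. x q - y q) \<in> trel M N"
  using trel.plus[OF _ trel.neg, of x M N y] by simp

lemma trel_fsums_okx:
  assumes "abgrp P" "\<And>m n. m \<in> bm_car M \<Longrightarrow> n \<in> bm_car N \<Longrightarrow> \<phi> (m, n) \<in> bm_car P"
  shows "x \<in> fsums M N \<Longrightarrow> okx P \<phi> x"
  using assms unfolding fsums_iff okx_def by auto

definition good :: "('x, 'm, 'a) bimod \<Rightarrow> ('a, 'n, 'y) bimod \<Rightarrow> ('u, 'p, 'v) bimod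
   \<Rightarrow> ('m \<times> 'n \<Rightarrow> 'p) \<Rightarrow> bool" where
  "good M N P \<phi> \<longleftrightarrow> (\<forall>m\<in>bm_car M. \<forall>n\<in>bm_car N. \<phi> (m, n) \<in> bm_car P)
    \<and> (\<forall>m\<in>bm_car M. \<forall>m'\<in>bm_car M. \<forall>n\<in>bm_car N.
         \<phi> (bm_plus M m m', n) = bm_plus P (\<phi> (m, n)) (\<phi> (m', n)))
    \<and> (\<forall>m\<in>bm_car M. \<forall>n\<in>bm_car N. \<forall>n'\<in>bm_car N.
         \<phi> (m, bm_plus N n n') = bm_plus P (\<phi> (m, n)) (\<phi> (m, n')))
    \<and> (\<forall>a. \<forall>m\<in>bm_car M. \<forall>n\<in>bm_car N. \<phi> (bm_ract M m a, n) = \<phi> (m, bm_lact N a n))"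

lemma goodI:
  assumes "\<And>m n. m \<in> bm_car M \<Longrightarrow> n \<in> bm_car N \<Longrightarrow> \<phi> (m, n) \<in> bm_car P"
    "\<And>m m' n. m \<in> bm_car M \<Longrightarrow> m' \<in> bm_car M \<Longrightarrow> n \<in> bm_car N \<Longrightarrow>
         \<phi> (bm_plus M m m', n) = bm_plus P (\<phi> (m, n)) (\<phi> (m', n))"
    "\<And>m n n'. m \<in> bm_car M \<Longrightarrow> n \<in> bm_car N \<Longrightarrow> n' \<in> bm_car N \<Longrightarrow>
         \<phi> (m, bm_plus N n n') = bm_plus P (\<phi> (m, n)) (\<phi> (m, n'))"
    "\<And>a m n. m \<in> bm_car M \<Longrightarrow> n \<in> bm_car N \<Longrightarrow> \<phi> (bm_ract M m a, n) = \<phi> (m, bm_lact N a n)"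
  shows "good M N P \<phi>"
  using assms unfolding good_def by blast

lemma good_car: "good M N P \<phi> \<Longrightarrow> m \<in> bm_car M \<Longrightarrow> n \<in> bm_car N \<Longrightarrow> \<phi> (m, n) \<in> bm_car P"
  unfolding good_def by blast
lemma good_addl: "good M N P \<phi> \<Longrightarrow> m \<in> bm_car M \<Longrightarrow> m' \<in> bm_car M \<Longrightarrow> n \<in> bm_car N \<Longrightarrow>
         \<phi> (bm_plus M m m', n) = bm_plus P (\<phi> (m, n)) (\<phi> (m', n))"
  unfolding good_def by blast
lemma good_addr: "good M N P \<phi> \<Longrightarrow> m \<in> bm_car M \<Longrightarrow> n \<in> bm_car N \<Longrightarrow> n' \<in> bm_car N \<Longrightarrow>
         \<phi> (m, bm_plus N n n') = bm_plus P (\<phi> (m, n)) (\<phi> (m, n'))"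
  unfolding good_def by blast
lemma good_bal: "good M N P \<phi> \<Longrightarrow> m \<in> bm_car M \<Longrightarrow> n \<in> bm_car N \<Longrightarrow>
   \<phi> (bm_ract M m a, n) = \<phi> (m, bm_lact N a n)"
  unfolding good_def by blast

lemma good_okx: "good M N P \<phi> \<Longrightarrow> x \<in> fsums M N \<Longrightarrow> okx P \<phi> x"
  unfolding fsums_iff okx_def good_def by blast

lemma okx_diff: "okx P \<phi> x \<Longrightarrow> okx P \<phi> y \<Longrightarrow> okx P \<phi> (\<lambda>q. x q - y q)"
proof -
  assume a: "okx P \<phi> x" "okx P \<phi> y"
  have s: "{q. x q - y q \<noteq> 0} \<subseteq> {q. x q \<noteq> 0} \<union> {q. y q \<noteq> 0}" by auto
  have f1: "finite {q. x q \<noteq> 0}" "finite {q. y q \<noteq> 0}" using a unfolding okx_def by auto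
  have "finite {q. x q - y q \<noteq> 0}" by (rule finite_subset[OF s]) (simp add: f1)
  moreover have "\<forall>q. x q - y q \<noteq> 0 \<longrightarrow> \<phi> q \<in> bm_car P"
    using a unfolding okx_def by (metis diff_zero diff_self)
  ultimately show ?thesis unfolding okx_def by blast
qed

lemma ag_rel3: "abgrp P \<Longrightarrow> b \<in> bm_car P \<Longrightarrow> c \<in> bm_car P \<Longrightarrow>
  bm_plus P (bm_plus P (bm_plus P b c) (bm_neg P b)) (bm_neg P c) = bm_zero P"
proof -
  assume G: "abgrp P" and bc: "b \<in> bm_car P" "c \<in> bm_car P"
  have "bm_plus P (bm_plus P b c) (bm_neg P b) = bm_plus P (bm_neg P b) (bm_plus P b c)"
    by (rule ag_comm[OF G]) (simp_all add: G bc)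
  also have "\<dots> = c" by (rule ag_cl2[OF G bc])
  finally show ?thesis by (simp add: G bc)
qed

lemma ssum_trel:
  assumes M: "bimodule M" and N: "bimodule N" and G: "abgrp P" and g: "good M N P \<phi>"
    and x: "x \<in> trel M N"
  shows "ssum P \<phi> x = bm_zero P"
  using x
proof (induction rule: trel.induct)
  note car = good_car[OF g]
  have okd: "\<And>m n. m \<in> bm_car M \<Longrightarrow> n \<in> bm_car N \<Longrightarrow> okx P \<phi> (delta (m, n))"
    by (rule okx_delta[OF G]) (simp add: car)
  have GM: "abgrp M" "abgrp N" using M N bimodule_abgrp by auto
  have sd: "\<And>m n. m \<in> bm_car M \<Longrightarrow> n \<in> bm_car N \<Longrightarrow> ssum P \<phi> (delta (m, n)) = \<phi> (m, n)"
    by (rule ssum_delta[OF G]) (rule car)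
  {
    case zero then show ?case by (rule ssum_zero[OF G])
  next
    case (addl m m' n)
    have mm: "bm_plus M m m' \<in> bm_car M" by (rule ag_plus[OF GM(1) addl(1,2)])
    have "ssum P \<phi> (\<lambda>q. delta (bm_plus M m m', n) q - delta (m, n) q - delta (m', n) q)
        = bm_plus P (bm_plus P (\<phi> (bm_plus M m m', n)) (bm_neg P (\<phi> (m, n)))) (bm_neg P (\<phi> (m', n)))"
      using ssum_diff[OF G okx_diff[OF okd[OF mm addl(3)] okd[OF addl(1,3)]] okd[OF addl(2,3)]]
        ssum_diff[OF G okd[OF mm addl(3)] okd[OF addl(1,3)]]
        sd[OF mm addl(3)] sd[OF addl(1,3)]
        sd[OF addl(2,3)]
      by (simp only:)
    also have "\<dots> = bm_zero P"
      by (simp only: good_addl[OF g addl(1,2,3)]) (rule ag_rel3[OF G car[OF addl(1,3)] car[OF addl(2,3)]])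
    finally show ?case .
  next
    case (addr m n n')
    have nn: "bm_plus N n n' \<in> bm_car N" by (rule ag_plus[OF GM(2) addr(2,3)])
    have "ssum P \<phi> (\<lambda>q. delta (m, bm_plus N n n') q - delta (m, n) q - delta (m, n') q)
        = bm_plus P (bm_plus P (\<phi> (m, bm_plus N n n')) (bm_neg P (\<phi> (m, n)))) (bm_neg P (\<phi> (m, n')))"
      using ssum_diff[OF G okx_diff[OF okd[OF addr(1) nn] okd[OF addr(1,2)]] okd[OF addr(1,3)]]
        ssum_diff[OF G okd[OF addr(1) nn] okd[OF addr(1,2)]]
        sd[OF addr(1) nn] sd[OF addr(1,2)]
        sd[OF addr(1,3)]
      by (simp only:)
    also have "\<dots> = bm_zero P"
      by (simp only: good_addr[OF g addr(1,2,3)]) (rule ag_rel3[OF G car[OF addr(1,2)] car[OF addr(1,3)]])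
    finally show ?case .
  next
    case (bal m n a)
    have c: "bm_ract M m a \<in> bm_car M" "bm_lact N a n \<in> bm_car N"
      using bal M N unfolding bimodule_def by auto
    have "ssum P \<phi> (\<lambda>q. delta (bm_ract M m a, n) q - delta (m, bm_lact N a n) q)
        = bm_plus P (\<phi> (bm_ract M m a, n)) (bm_neg P (\<phi> (m, bm_lact N a n)))"
      using ssum_diff[OF G okd[OF c(1) bal(2)] okd[OF bal(1) c(2)]]
        sd[OF c(1) bal(2)] sd[OF bal(1) c(2)]
      by (simp only:)
    also have "\<dots> = bm_zero P"
      by (simp only: good_bal[OF g bal(1,2)]) (rule ag_negr[OF G car[OF bal(1) c(2)]])
    finally show ?case .
  next
    case (plus x y)
    have "okx P \<phi> x" "okx P \<phi> y"
      using good_okx[OF g trel_fsums[OF M N plus(1)]] good_okx[OF g trel_fsums[OF M N plus(2)]]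
      by auto
    then show ?case using plus by (simp add: ssum_add[OF G] G)
  next
    case (neg x)
    have "okx P \<phi> x"
      by (rule good_okx[OF g trel_fsums[OF M N neg(1)]])
    then show ?case using neg by (simp add: ssum_neg[OF G] G)
  }
qed


lemma ag_eq_of_diff: "abgrp P \<Longrightarrow> a \<in> bm_car P \<Longrightarrow> b \<in> bm_car P \<Longrightarrow>
  bm_plus P a (bm_neg P b) = bm_zero P \<Longrightarrow> a = b"
proof -
  assume G: "abgrp P" and ab: "a \<in> bm_car P" "b \<in> bm_car P" and e: "bm_plus P a (bm_neg P b) = bm_zero P"
  have "a = bm_plus P (bm_plus P a (bm_neg P b)) b"
    by (simp add: ag_assoc[OF G] G ab)
  also have "\<dots> = b" by (simp add: e G ab)
  finally show ?thesis .
qed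

lemma trel_swap: "(\<lambda>q. x q - y q) \<in> trel M N \<Longrightarrow> (\<lambda>q. y q - x q) \<in> trel M N"
  using trel.neg[of "\<lambda>q. x q - y q" M N] by simp

lemma trel_add2: "(\<lambda>q. a q - b q) \<in> trel M N \<Longrightarrow> (\<lambda>q. c q - d q) \<in> trel M N \<Longrightarrow>
  (\<lambda>q. (a q + c q) - (b q + d q)) \<in> trel M N"
  using trel.plus[of "\<lambda>q. a q - b q" M N "\<lambda>q. c q - d q"] by (simp add: algebra_simps)

lemma trel_trans: "(\<lambda>q. a q - b q) \<in> trel M N \<Longrightarrow> (\<lambda>q. b q - c q) \<in> trel M N \<Longrightarrow>
  (\<lambda>q. a q - c q) \<in> trel M N"
  using trel.plus[of "\<lambda>q. a q - b q" M N "\<lambda>q. b q - c q"] by (simp add: algebra_simps)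

lemma tcls_mem: "x \<in> fsums M N \<Longrightarrow> x \<in> tcls M N x"
  unfolding tcls_def using trel.zero by simp

lemma tcls_eq:
  assumes "(\<lambda>q. x q - y q) \<in> trel M N"
  shows "tcls M N x = tcls M N y"
  unfolding tcls_def
  using assms trel_trans[of x y M N] trel_trans[of y x M N] trel_swap[of x y M N] by blast

lemma rep_tcls:
  assumes "x \<in> fsums M N"
  shows "rep (tcls M N x) \<in> fsums M N" "(\<lambda>q. x q - rep (tcls M N x) q) \<in> trel M N"
proof -
  have "rep (tcls M N x) \<in> tcls M N x"
    unfolding rep_def by (rule someI[of "\<lambda>y. y \<in> tcls M N x" x]) (rule tcls_mem[OF assms])
  then show "rep (tcls M N x) \<in> fsums M N" "(\<lambda>q. x q - rep (tcls M N x) q) \<in> trel M N"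
    unfolding tcls_def by auto
qed

lemma tens_car: "bm_car (tens M N) = tcls M N ` fsums M N" by (simp add: tens_def)
lemma tens_zero: "bm_zero (tens M N) = tcls M N (\<lambda>_. 0)" by (simp add: tens_def)
lemma tens_plus_def: "bm_plus (tens M N) t u = tcls M N (\<lambda>q. rep t q + rep u q)" by (simp add: tens_def)
lemma tens_neg_def: "bm_neg (tens M N) t = tcls M N (\<lambda>q. - rep t q)" by (simp add: tens_def)

lemma tplus: "x \<in> fsums M N \<Longrightarrow> y \<in> fsums M N \<Longrightarrow>
  bm_plus (tens M N) (tcls M N x) (tcls M N y) = tcls M N (\<lambda>q. x q + y q)"
  unfolding tens_plus_def
  by (rule tcls_eq, rule trel_swap, rule trel_add2) (simp_all add: rep_tcls)

lemma tneg: "x \<in> fsums M N \<Longrightarrow> bm_neg (tens M N) (tcls M N x) = tcls M N (\<lambda>q. - x q)"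
  unfolding tens_neg_def
  by (rule tcls_eq) (use rep_tcls(2)[of x M N] in simp)

lemma tcls_car: "x \<in> fsums M N \<Longrightarrow> tcls M N x \<in> bm_car (tens M N)"
  by (simp add: tens_car)

lemma tens_carE: "u \<in> bm_car (tens M N) \<Longrightarrow> (\<And>x. x \<in> fsums M N \<Longrightarrow> u = tcls M N x \<Longrightarrow> R) \<Longrightarrow> R"
  by (auto simp: tens_car)

lemma abgrp_tens: "abgrp (tens M N)"
  unfolding abgrp_def
proof (intro conjI ballI)
  show "bm_zero (tens M N) \<in> bm_car (tens M N)" by (simp add: tens_zero tcls_car fsums_zero)
next
  fix u v assume "u \<in> bm_car (tens M N)" "v \<in> bm_car (tens M N)"
  then show "bm_plus (tens M N) u v \<in> bm_car (tens M N)"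
    by (auto elim!: tens_carE simp: tplus tcls_car fsums_add)
next
  fix u assume "u \<in> bm_car (tens M N)"
  then show "bm_neg (tens M N) u \<in> bm_car (tens M N)"
    by (auto elim!: tens_carE simp: tneg tcls_car fsums_neg)
next
  fix u v w assume "u \<in> bm_car (tens M N)" "v \<in> bm_car (tens M N)" "w \<in> bm_car (tens M N)"
  then show "bm_plus (tens M N) (bm_plus (tens M N) u v) w = bm_plus (tens M N) u (bm_plus (tens M N) v w)"
    by (auto elim!: tens_carE simp: tplus fsums_add add.assoc)
next
  fix u v assume "u \<in> bm_car (tens M N)" "v \<in> bm_car (tens M N)"
  then show "bm_plus (tens M N) u v = bm_plus (tens M N) v u"
    by (auto elim!: tens_carE simp: tplus add.commute)
next
  fix u assume "u \<in> bm_car (tens M N)"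
  then show "bm_plus (tens M N) (bm_zero (tens M N)) u = u"
    by (auto elim!: tens_carE simp: tplus tens_zero fsums_zero)
next
  fix u assume "u \<in> bm_car (tens M N)"
  then show "bm_plus (tens M N) (bm_neg (tens M N) u) u = bm_zero (tens M N)"
    by (auto elim!: tens_carE simp: tplus tneg tens_zero fsums_neg)
qed

lemma lift_tcls:
  assumes M: "bimodule M" and N: "bimodule N" and G: "abgrp P" and g: "good M N P \<phi>"
    and x: "x \<in> fsums M N"
  shows "lift P \<phi> (tcls M N x) = ssum P \<phi> x"
proof -
  define r where "r = rep (tcls M N x)"
  have r: "r \<in> fsums M N" "(\<lambda>q. x q - r q) \<in> trel M N" using rep_tcls[OF x] r_def by auto
  have "ssum P \<phi> (\<lambda>q. x q - r q) = bm_zero P" by (rule ssum_trel[OF M N G g r(2)])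
  then have "bm_plus P (ssum P \<phi> x) (bm_neg P (ssum P \<phi> r)) = bm_zero P"
    by (simp add: ssum_diff[OF G good_okx[OF g x] good_okx[OF g r(1)]])
  then have "ssum P \<phi> x = ssum P \<phi> r"
    by (rule ag_eq_of_diff[OF G ssum_car[OF G good_okx[OF g x]] ssum_car[OF G good_okx[OF g r(1)]]])
  then show ?thesis by (simp add: lift_ssum r_def)
qed

definition tstruct_eq :: "('u, 'p, 'v) bimod \<Rightarrow> ('u2, 'p, 'v2) bimod \<Rightarrow> bool" where
  "tstruct_eq P Q \<longleftrightarrow> bm_plus P = bm_plus Q \<and> bm_zero P = bm_zero Q \<and> bm_neg P = bm_neg Q"

lemma lift_tstruct: assumes "tstruct_eq P Q" shows "lift P \<phi> t = lift Q \<phi> t"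
proof -
  have e: "bm_plus P = bm_plus Q" "bm_zero P = bm_zero Q" "bm_neg P = bm_neg Q"
    using assms unfolding tstruct_eq_def by auto
  show ?thesis unfolding lift_def msum_def zmul_def e ..
qed

lemma tgrp_lift: "lift (tgrp M N) \<phi> t = lift (tens M N) \<phi> t"
  by (rule lift_tstruct) (simp add: tstruct_eq_def tgrp_def tens_def)

lemma tel_car: "m \<in> bm_car M \<Longrightarrow> n \<in> bm_car N \<Longrightarrow> tel M N m n \<in> bm_car (tens M N)"
  unfolding tel_def by (rule tcls_car[OF fsums_delta])

context
  fixes M :: "('x::ring_1, 'm, 'a::ring_1) bimod" and N :: "('a, 'n, 'y::ring_1) bimod"
  assumes M: "bimodule M" and N: "bimodule N"
begin

lemma tel_addl: "m \<in> bm_car M \<Longrightarrow> m' \<in> bm_car M \<Longrightarrow> n \<in> bm_car N \<Longrightarrow>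
  tel M N (bm_plus M m m') n = bm_plus (tens M N) (tel M N m n) (tel M N m' n)"
  unfolding tel_def
  apply (subst tplus, (rule fsums_delta, assumption+)+)
  apply (rule tcls_eq)
  using trel.addl[of m M m' n N] by (simp add: algebra_simps)

lemma tel_addr: "m \<in> bm_car M \<Longrightarrow> n \<in> bm_car N \<Longrightarrow> n' \<in> bm_car N \<Longrightarrow>
  tel M N m (bm_plus N n n') = bm_plus (tens M N) (tel M N m n) (tel M N m n')"
  unfolding tel_def
  apply (subst tplus, (rule fsums_delta, assumption+)+)
  apply (rule tcls_eq)
  using trel.addr[of m M n N n'] by (simp add: algebra_simps)

lemma tel_bal: "m \<in> bm_car M \<Longrightarrow> n \<in> bm_car N \<Longrightarrow>
  tel M N (bm_ract M m a) n = tel M N m (bm_lact N a n)"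
  unfolding tel_def
  by (rule tcls_eq) (rule trel.bal)

lemma tcls_smul: "m \<in> bm_car M \<Longrightarrow> n \<in> bm_car N \<Longrightarrow> (\<lambda>q. c * delta (m, n) q) \<in> fsums M N"
  unfolding fsums_iff delta_def by auto

lemma tens_induct:
  assumes u: "u \<in> bm_car (tens M N)"
    and z: "Q (bm_zero (tens M N))"
    and t: "\<And>m n. m \<in> bm_car M \<Longrightarrow> n \<in> bm_car N \<Longrightarrow> Q (tel M N m n)"
    and p: "\<And>u v. u \<in> bm_car (tens M N) \<Longrightarrow> v \<in> bm_car (tens M N) \<Longrightarrow> Q u \<Longrightarrow> Q v \<Longrightarrow>
              Q (bm_plus (tens M N) u v)"
    and ng: "\<And>u. u \<in> bm_car (tens M N) \<Longrightarrow> Q u \<Longrightarrow> Q (bm_neg (tens M N) u)"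
  shows "Q u"
proof -
  have nat_case: "Q (tcls M N (\<lambda>q. int k * delta (m, n) q))"
    if mn: "m \<in> bm_car M" "n \<in> bm_car N" for k m n
  proof (induction k)
    case 0 then show ?case using z by (simp add: tens_zero)
  next
    case (Suc k)
    have "tcls M N (\<lambda>q. int (Suc k) * delta (m, n) q)
        = bm_plus (tens M N) (tcls M N (\<lambda>q. int k * delta (m, n) q)) (tel M N m n)"
      unfolding tel_def
      by (subst tplus[OF tcls_smul[OF mn] fsums_delta[OF mn]]) (simp add: algebra_simps)
    then show ?case
      using p[OF tcls_car[OF tcls_smul[OF mn]] tel_car[OF mn] Suc t[OF mn]] by simp
  qed
  have int_case: "Q (tcls M N (\<lambda>q. c * delta (m, n) q))"
    if mn: "m \<in> bm_car M" "n \<in> bm_car N" for c m n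
  proof (cases "0 \<le> c")
    case True
    then show ?thesis using nat_case[OF mn, of "nat c"] by simp
  next
    case False
    have e: "(\<lambda>q. c * delta (m, n) q) = (\<lambda>q. - (int (nat (- c)) * delta (m, n) q))"
      using False by auto
    have "tcls M N (\<lambda>q. c * delta (m, n) q) = bm_neg (tens M N) (tcls M N (\<lambda>q. int (nat (- c)) * delta (m, n) q))"
      by (simp only: e tneg[OF tcls_smul[OF mn]])
    then show ?thesis using ng[OF tcls_car[OF tcls_smul[OF mn]] nat_case[OF mn, of "nat (- c)"]]
      by (simp only:)
  qed
  have main: "\<forall>x. x \<in> fsums M N \<longrightarrow> {q. x q \<noteq> 0} = F \<longrightarrow> Q (tcls M N x)" if F: "finite F" for F
    using F
  proof (induction F rule: finite_induct)
    case empty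
    {
      fix x assume "x \<in> fsums M N" "{q. x q \<noteq> 0} = {}"
      then have "x = (\<lambda>_. 0)" by auto
      then have "Q (tcls M N x)" using z by (simp add: tens_zero)
    }
    then show ?case by blast
  next
    case (insert p F)
    {
      fix x assume x: "x \<in> fsums M N" "{q. x q \<noteq> 0} = insert p F"
      obtain m n where pmn: "p = (m, n)" by (cases p)
      have mn: "m \<in> bm_car M" "n \<in> bm_car N" using x pmn unfolding fsums_iff by auto
      define x' where "x' = x(p := 0)"
      have x'f: "x' \<in> fsums M N" using x unfolding fsums_iff x'_def
        by (auto intro: finite_subset[of _ "{q. x q \<noteq> 0}"])
      have x's: "{q. x' q \<noteq> 0} = F" using x insert(2) unfolding x'_def by auto
      have xe: "x = (\<lambda>q. x' q + x p * delta (m, n) q)"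
        by (auto simp: x'_def delta_def pmn)
      have "tcls M N x = bm_plus (tens M N) (tcls M N x') (tcls M N (\<lambda>q. x p * delta (m, n) q))"
        by (subst tplus[OF x'f tcls_smul[OF mn]]) (simp add: xe[symmetric])
      then have "Q (tcls M N x)"
        using p[OF tcls_car[OF x'f] tcls_car[OF tcls_smul[OF mn]] insert.IH[rule_format, OF x'f x's] int_case[OF mn]]
        by simp
    }
    then show ?case by blast
  qed
  obtain x where x: "x \<in> fsums M N" "u = tcls M N x" using u by (auto simp: tens_car)
  have "finite {q. x q \<noteq> 0}" using x unfolding fsums_iff by auto
  then show ?thesis using main x by blast
qed

lemma tens_ext:
  assumes G: "abgrp P" and F: "addhom (tens M N) P F" and H: "addhom (tens M N) P H"
    and t: "\<And>m n. m \<in> bm_car M \<Longrightarrow> n \<in> bm_car N \<Longrightarrow> F (tel M N m n) = H (tel M N m n)"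
    and u: "u \<in> bm_car (tens M N)"
  shows "F u = H u"
  using u
proof (induction rule: tens_induct)
  case 1 show ?case using u .
next
  case 2 show ?case by (simp add: addhom_zero[OF abgrp_tens G F] addhom_zero[OF abgrp_tens G H])
next
  case (3 m n) show ?case by (rule t[OF 3(1,2)])
next
  case (4 u v) then show ?case by (simp add: addhomD2[OF F] addhomD2[OF H])
next
  case (5 u) then show ?case by (simp add: addhom_neg[OF abgrp_tens G F] addhom_neg[OF abgrp_tens G H])
qed

lemma lift_tel:
  assumes G: "abgrp P" and g: "good M N P \<phi>" and mn: "m \<in> bm_car M" "n \<in> bm_car N"
  shows "lift P \<phi> (tel M N m n) = \<phi> (m, n)"
  unfolding tel_def
  by (simp add: lift_tcls[OF M N G g fsums_delta[OF mn]] ssum_delta[of P \<phi> "(m, n)", OF G good_car[OF g mn]])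

lemma lift_addhom:
  assumes G: "abgrp P" and g: "good M N P \<phi>"
  shows "addhom (tens M N) P (lift P \<phi>)"
proof (rule addhomI)
  fix u assume "u \<in> bm_car (tens M N)"
  then obtain x where x: "x \<in> fsums M N" "u = tcls M N x" by (auto simp: tens_car)
  then show "lift P \<phi> u \<in> bm_car P"
    by (simp add: lift_tcls[OF M N G g] ssum_car[OF G good_okx[OF g]])
next
  fix u v assume "u \<in> bm_car (tens M N)" "v \<in> bm_car (tens M N)"
  then obtain x y where x: "x \<in> fsums M N" "u = tcls M N x" and y: "y \<in> fsums M N" "v = tcls M N y"
    by (auto simp: tens_car)
  then show "lift P \<phi> (bm_plus (tens M N) u v) = bm_plus P (lift P \<phi> u) (lift P \<phi> v)"
    by (simp add: tplus lift_tcls[OF M N G g] fsums_add ssum_add[OF G good_okx[OF g] good_okx[OF g]])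
qed

end

lemma lift_cong:
  assumes u: "u \<in> bm_car (tens M N)"
    and e: "\<And>m n. m \<in> bm_car M \<Longrightarrow> n \<in> bm_car N \<Longrightarrow> \<phi> (m, n) = \<psi> (m, n)"
  shows "lift P \<phi> u = lift P \<psi> u"
proof -
  obtain x where x: "x \<in> fsums M N" "u = tcls M N x" using u by (auto simp: tens_car)
  have r: "rep u \<in> fsums M N" using rep_tcls(1)[OF x(1)] x(2) by simp
  show ?thesis unfolding lift_ssum ssum_def
  proof (rule msum_cong)
    fix q assume "q \<in> {q. rep u q \<noteq> 0}"
    then have "q \<in> bm_car M \<times> bm_car N" using r unfolding fsums_iff by auto
    then show "zmul P (rep u q) (\<phi> q) = zmul P (rep u q) (\<psi> q)" using e by auto
  qed
qed


context
  fixes M :: "('b::ring_1, 'm, 'a::ring_1) bimod"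
  assumes B: "bimodule M"
begin
lemma bm_lact_plus: "x \<in> bm_car M \<Longrightarrow> y \<in> bm_car M \<Longrightarrow>
   bm_lact M b (bm_plus M x y) = bm_plus M (bm_lact M b x) (bm_lact M b y)"
  using B unfolding bimodule_def by simp
lemma bm_ract_plus: "x \<in> bm_car M \<Longrightarrow> y \<in> bm_car M \<Longrightarrow>
   bm_ract M (bm_plus M x y) a = bm_plus M (bm_ract M x a) (bm_ract M y a)"
  using B unfolding bimodule_def by simp
lemma bm_lact_one: "x \<in> bm_car M \<Longrightarrow> bm_lact M 1 x = x"
  using B unfolding bimodule_def by simp
lemma bm_ract_one: "x \<in> bm_car M \<Longrightarrow> bm_ract M x 1 = x"
  using B unfolding bimodule_def by simp
lemma bm_lact_mult: "x \<in> bm_car M \<Longrightarrow> bm_lact M (b * b') x = bm_lact M b (bm_lact M b' x)"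
  using B unfolding bimodule_def by simp
lemma bm_ract_mult: "x \<in> bm_car M \<Longrightarrow> bm_ract M x (a * a') = bm_ract M (bm_ract M x a) a'"
  using B unfolding bimodule_def by simp
lemma bm_lact_add: "x \<in> bm_car M \<Longrightarrow> bm_lact M (b + b') x = bm_plus M (bm_lact M b x) (bm_lact M b' x)"
  using B unfolding bimodule_def by simp
lemma bm_ract_add: "x \<in> bm_car M \<Longrightarrow> bm_ract M x (a + a') = bm_plus M (bm_ract M x a) (bm_ract M x a')"
  using B unfolding bimodule_def by simp
lemma bm_compat: "x \<in> bm_car M \<Longrightarrow> bm_ract M (bm_lact M b x) a = bm_lact M b (bm_ract M x a)"
  using B unfolding bimodule_def by simp
end

lemma bimoduleI:
  fixes M :: "('b::ring_1, 'm, 'a::ring_1) bimod"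
  assumes "abgrp M"
    and "\<And>b x. x \<in> bm_car M \<Longrightarrow> bm_lact M b x \<in> bm_car M"
    and "\<And>a x. x \<in> bm_car M \<Longrightarrow> bm_ract M x a \<in> bm_car M"
    and "\<And>x. x \<in> bm_car M \<Longrightarrow> bm_lact M 1 x = x"
    and "\<And>b b' x. x \<in> bm_car M \<Longrightarrow> bm_lact M (b * b') x = bm_lact M b (bm_lact M b' x)"
    and "\<And>b b' x. x \<in> bm_car M \<Longrightarrow> bm_lact M (b + b') x = bm_plus M (bm_lact M b x) (bm_lact M b' x)"
    and "\<And>b x y. x \<in> bm_car M \<Longrightarrow> y \<in> bm_car M \<Longrightarrow>
        bm_lact M b (bm_plus M x y) = bm_plus M (bm_lact M b x) (bm_lact M b y)"
    and "\<And>x. x \<in> bm_car M \<Longrightarrow> bm_ract M x 1 = x"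
    and "\<And>a a' x. x \<in> bm_car M \<Longrightarrow> bm_ract M x (a * a') = bm_ract M (bm_ract M x a) a'"
    and "\<And>a a' x. x \<in> bm_car M \<Longrightarrow> bm_ract M x (a + a') = bm_plus M (bm_ract M x a) (bm_ract M x a')"
    and "\<And>a x y. x \<in> bm_car M \<Longrightarrow> y \<in> bm_car M \<Longrightarrow>
        bm_ract M (bm_plus M x y) a = bm_plus M (bm_ract M x a) (bm_ract M y a)"
    and "\<And>a b x. x \<in> bm_car M \<Longrightarrow> bm_ract M (bm_lact M b x) a = bm_lact M b (bm_ract M x a)"
  shows "bimodule M"
  using assms(1) unfolding bimodule_def abgrp_def
  apply (elim conjE)
  apply (intro conjI ballI allI)
  apply (assumption | (rule assms(2-12); assumption) | blast)+
  done


section \<open>The tensor product is a bimodule\<close>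

lemma addhom_plus: "abgrp P \<Longrightarrow> addhom M P F \<Longrightarrow> addhom M P H \<Longrightarrow>
  addhom M P (\<lambda>u. bm_plus P (F u) (H u))"
proof -
  assume G: "abgrp P" and F: "addhom M P F" and H: "addhom M P H"
  show ?thesis
  proof (rule addhomI)
    fix x assume "x \<in> bm_car M"
    then show "bm_plus P (F x) (H x) \<in> bm_car P" using addhomD1[OF F] addhomD1[OF H] G by simp
  next
    fix x y assume xy: "x \<in> bm_car M" "y \<in> bm_car M"
    show "bm_plus P (F (bm_plus M x y)) (H (bm_plus M x y)) =
      bm_plus P (bm_plus P (F x) (H x)) (bm_plus P (F y) (H y))"
      unfolding addhomD2[OF F xy] addhomD2[OF H xy]
      by (rule ag_swap4[OF G]) (simp_all add: addhomD1[OF F] addhomD1[OF H] xy)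
  qed
qed

context
  fixes M :: "('x::ring_1, 'm, 'a::ring_1) bimod" and N :: "('a, 'n, 'y::ring_1) bimod"
  assumes M: "bimodule M" and N: "bimodule N"
begin

lemma tens_lact_raw: "bm_lact (tens M N) b t =
  lift (tgrp M N :: (unit, _, unit) bimod) (\<lambda>(m, n). tel M N (bm_lact M b m) n) t"
  unfolding tens_def by (simp only: bimod.select_convs)

lemma tens_ract_raw: "bm_ract (tens M N) t a =
  lift (tgrp M N :: (unit, _, unit) bimod) (\<lambda>(m, n). tel M N m (bm_ract N n a)) t"
  unfolding tens_def by (simp only: bimod.select_convs)

lemma tens_lact_lift: "bm_lact (tens M N) b t = lift (tens M N) (\<lambda>(m, n). tel M N (bm_lact M b m) n) t"
  by (simp only: tens_lact_raw tgrp_lift)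

lemma tens_ract_lift: "bm_ract (tens M N) t a = lift (tens M N) (\<lambda>(m, n). tel M N m (bm_ract N n a)) t"
  by (simp only: tens_ract_raw tgrp_lift)

lemma good_lact: "good M N (tens M N) (\<lambda>(m, n). tel M N (bm_lact M b m) n)"
proof (rule goodI)
  fix m n assume "m \<in> bm_car M" "n \<in> bm_car N"
  then show "(case (m, n) of (m, n) \<Rightarrow> tel M N (bm_lact M b m) n) \<in> bm_car (tens M N)"
    unfolding case_prod_conv by (rule tel_car[OF bm_lact_car[OF M]])
next
  fix m m' n assume "m \<in> bm_car M" "m' \<in> bm_car M" "n \<in> bm_car N"
  then show "(case (bm_plus M m m', n) of (m, n) \<Rightarrow> tel M N (bm_lact M b m) n) =
     bm_plus (tens M N) (case (m, n) of (m, n) \<Rightarrow> tel M N (bm_lact M b m) n)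
      (case (m', n) of (m, n) \<Rightarrow> tel M N (bm_lact M b m) n)"
    unfolding case_prod_conv bm_lact_plus[OF M \<open>m \<in> bm_car M\<close> \<open>m' \<in> bm_car M\<close>]
    by (rule tel_addl[OF M N bm_lact_car[OF M] bm_lact_car[OF M]])
next
  fix m n n' assume "m \<in> bm_car M" "n \<in> bm_car N" "n' \<in> bm_car N"
  then show "(case (m, bm_plus N n n') of (m, n) \<Rightarrow> tel M N (bm_lact M b m) n) =
     bm_plus (tens M N) (case (m, n) of (m, n) \<Rightarrow> tel M N (bm_lact M b m) n)
      (case (m, n') of (m, n) \<Rightarrow> tel M N (bm_lact M b m) n)"
    unfolding case_prod_conv by (rule tel_addr[OF M N bm_lact_car[OF M]])
next
  fix a m n assume "m \<in> bm_car M" "n \<in> bm_car N"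
  then show "(case (bm_ract M m a, n) of (m, n) \<Rightarrow> tel M N (bm_lact M b m) n) =
     (case (m, bm_lact N a n) of (m, n) \<Rightarrow> tel M N (bm_lact M b m) n)"
    unfolding case_prod_conv bm_compat[OF M \<open>m \<in> bm_car M\<close>, symmetric]
    by (rule tel_bal[OF M N bm_lact_car[OF M]])
qed

lemma good_ract: "good M N (tens M N) (\<lambda>(m, n). tel M N m (bm_ract N n a))"
proof (rule goodI)
  fix m n assume "m \<in> bm_car M" "n \<in> bm_car N"
  then show "(case (m, n) of (m, n) \<Rightarrow> tel M N m (bm_ract N n a)) \<in> bm_car (tens M N)"
    unfolding case_prod_conv by (rule tel_car[OF _ bm_ract_car[OF N]])
next
  fix m m' n assume "m \<in> bm_car M" "m' \<in> bm_car M" "n \<in> bm_car N"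
  then show "(case (bm_plus M m m', n) of (m, n) \<Rightarrow> tel M N m (bm_ract N n a)) =
     bm_plus (tens M N) (case (m, n) of (m, n) \<Rightarrow> tel M N m (bm_ract N n a))
      (case (m', n) of (m, n) \<Rightarrow> tel M N m (bm_ract N n a))"
    unfolding case_prod_conv by (rule tel_addl[OF M N _ _ bm_ract_car[OF N]])
next
  fix m n n' assume "m \<in> bm_car M" "n \<in> bm_car N" "n' \<in> bm_car N"
  then show "(case (m, bm_plus N n n') of (m, n) \<Rightarrow> tel M N m (bm_ract N n a)) =
     bm_plus (tens M N) (case (m, n) of (m, n) \<Rightarrow> tel M N m (bm_ract N n a))
      (case (m, n') of (m, n) \<Rightarrow> tel M N m (bm_ract N n a))"
    unfolding case_prod_conv bm_ract_plus[OF N \<open>n \<in> bm_car N\<close> \<open>n' \<in> bm_car N\<close>]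
    by (rule tel_addr[OF M N _ bm_ract_car[OF N] bm_ract_car[OF N]])
next
  fix a' m n assume "m \<in> bm_car M" "n \<in> bm_car N"
  then show "(case (bm_ract M m a', n) of (m, n) \<Rightarrow> tel M N m (bm_ract N n a)) =
     (case (m, bm_lact N a' n) of (m, n) \<Rightarrow> tel M N m (bm_ract N n a))"
    unfolding case_prod_conv bm_compat[OF N \<open>n \<in> bm_car N\<close>]
    by (rule tel_bal[OF M N _ bm_ract_car[OF N]])
qed

lemma tens_lact_tel: "m \<in> bm_car M \<Longrightarrow> n \<in> bm_car N \<Longrightarrow>
  bm_lact (tens M N) b (tel M N m n) = tel M N (bm_lact M b m) n"
  by (simp add: tens_lact_lift lift_tel[OF M N abgrp_tens good_lact])

lemma tens_ract_tel: "m \<in> bm_car M \<Longrightarrow> n \<in> bm_car N \<Longrightarrow>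
  bm_ract (tens M N) (tel M N m n) a = tel M N m (bm_ract N n a)"
  by (simp add: tens_ract_lift lift_tel[OF M N abgrp_tens good_ract])

lemma tens_lact_addhom: "addhom (tens M N) (tens M N) (bm_lact (tens M N) b)"
  unfolding tens_lact_lift[abs_def] by (rule lift_addhom[OF M N abgrp_tens good_lact])

lemma tens_ract_addhom: "addhom (tens M N) (tens M N) (\<lambda>u. bm_ract (tens M N) u a)"
  unfolding tens_ract_lift by (rule lift_addhom[OF M N abgrp_tens good_ract])

lemma tens_lact_car: "u \<in> bm_car (tens M N) \<Longrightarrow> bm_lact (tens M N) b u \<in> bm_car (tens M N)"
  by (rule addhomD1[OF tens_lact_addhom])

lemma tens_ract_car: "u \<in> bm_car (tens M N) \<Longrightarrow> bm_ract (tens M N) u a \<in> bm_car (tens M N)"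
  using addhomD1[OF tens_ract_addhom] by blast

lemmas TE = tens_ext[OF M N abgrp_tens]

lemma bimodule_tens: "bimodule (tens M N)"
proof (rule bimoduleI)
  show "abgrp (tens M N)" by (rule abgrp_tens)
  show "\<And>b x. x \<in> bm_car (tens M N) \<Longrightarrow> bm_lact (tens M N) b x \<in> bm_car (tens M N)"
    by (rule tens_lact_car)
  show "\<And>a x. x \<in> bm_car (tens M N) \<Longrightarrow> bm_ract (tens M N) x a \<in> bm_car (tens M N)"
    by (rule tens_ract_car)
  show "\<And>x. x \<in> bm_car (tens M N) \<Longrightarrow> bm_lact (tens M N) 1 x = x"
    by (rule TE[OF tens_lact_addhom addhom_id]) (simp add: tens_lact_tel bm_lact_one[OF M])
  show "\<And>b b' x. x \<in> bm_car (tens M N) \<Longrightarrow>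
      bm_lact (tens M N) (b * b') x = bm_lact (tens M N) b (bm_lact (tens M N) b' x)"
    by (rule TE[OF tens_lact_addhom addhom_comp[OF tens_lact_addhom tens_lact_addhom]])
      (simp add: tens_lact_tel bm_lact_mult[OF M] bm_lact_car[OF M])
  show "\<And>b b' x. x \<in> bm_car (tens M N) \<Longrightarrow> bm_lact (tens M N) (b + b') x =
      bm_plus (tens M N) (bm_lact (tens M N) b x) (bm_lact (tens M N) b' x)"
    by (rule TE[OF tens_lact_addhom addhom_plus[OF abgrp_tens tens_lact_addhom tens_lact_addhom]])
      (simp add: tens_lact_tel bm_lact_add[OF M] bm_lact_car[OF M] tel_addl[OF M N])
  show "\<And>b x y. x \<in> bm_car (tens M N) \<Longrightarrow> y \<in> bm_car (tens M N) \<Longrightarrow>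
        bm_lact (tens M N) b (bm_plus (tens M N) x y) =
        bm_plus (tens M N) (bm_lact (tens M N) b x) (bm_lact (tens M N) b y)"
    by (rule addhomD2[OF tens_lact_addhom])
  show "\<And>x. x \<in> bm_car (tens M N) \<Longrightarrow> bm_ract (tens M N) x 1 = x"
    by (rule TE[OF tens_ract_addhom addhom_id]) (simp add: tens_ract_tel bm_ract_one[OF N])
  show "\<And>a a' x. x \<in> bm_car (tens M N) \<Longrightarrow>
      bm_ract (tens M N) x (a * a') = bm_ract (tens M N) (bm_ract (tens M N) x a) a'"
    by (rule TE[OF tens_ract_addhom addhom_comp[OF tens_ract_addhom tens_ract_addhom]])
      (simp add: tens_ract_tel bm_ract_mult[OF N] bm_ract_car[OF N])
  show "\<And>a a' x. x \<in> bm_car (tens M N) \<Longrightarrow> bm_ract (tens M N) x (a + a') =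
      bm_plus (tens M N) (bm_ract (tens M N) x a) (bm_ract (tens M N) x a')"
    by (rule TE[OF tens_ract_addhom addhom_plus[OF abgrp_tens tens_ract_addhom tens_ract_addhom]])
      (simp add: tens_ract_tel bm_ract_add[OF N] bm_ract_car[OF N] tel_addr[OF M N])
  show "\<And>a x y. x \<in> bm_car (tens M N) \<Longrightarrow> y \<in> bm_car (tens M N) \<Longrightarrow>
        bm_ract (tens M N) (bm_plus (tens M N) x y) a =
        bm_plus (tens M N) (bm_ract (tens M N) x a) (bm_ract (tens M N) y a)"
    using addhomD2[OF tens_ract_addhom] by blast
  show "\<And>a b x. x \<in> bm_car (tens M N) \<Longrightarrow>
      bm_ract (tens M N) (bm_lact (tens M N) b x) a = bm_lact (tens M N) b (bm_ract (tens M N) x a)"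
    by (rule TE[OF addhom_comp[OF tens_lact_addhom tens_ract_addhom]
          addhom_comp[OF tens_ract_addhom tens_lact_addhom]])
      (simp add: tens_ract_tel tens_lact_tel bm_ract_car[OF N] bm_lact_car[OF M])
qed

end


section \<open>Tensor product of maps\<close>

lemma tel_addhom_left: "bimodule M \<Longrightarrow> bimodule N \<Longrightarrow> n \<in> bm_car N \<Longrightarrow>
  addhom M (tens M N) (\<lambda>m. tel M N m n)"
  by (rule addhomI) (simp_all add: tel_car tel_addl)

lemma tel_addhom_right: "bimodule M \<Longrightarrow> bimodule N \<Longrightarrow> m \<in> bm_car M \<Longrightarrow>
  addhom N (tens M N) (\<lambda>n. tel M N m n)"
  by (rule addhomI) (simp_all add: tel_car tel_addr)

lemma tmap_cong:
  assumes "u \<in> bm_car (tens M N)" "\<And>m. m \<in> bm_car M \<Longrightarrow> f m = f' m" "\<And>n. n \<in> bm_car N \<Longrightarrow> g n = g' n"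
  shows "tmap M' N' f g u = tmap M' N' f' g' u"
  unfolding tmap_def by (rule lift_cong[OF assms(1)]) (simp add: assms(2,3))

context
  fixes M :: "('x::ring_1, 'm, 'a::ring_1) bimod" and N :: "('a, 'n, 'y::ring_1) bimod"
    and M' :: "('x2::ring_1, 'm2, 'a) bimod" and N' :: "('a, 'n2, 'y2::ring_1) bimod"
    and f :: "'m \<Rightarrow> 'm2" and g :: "'n \<Rightarrow> 'n2"
  assumes M: "bimodule M" and N: "bimodule N" and M': "bimodule M'" and N': "bimodule N'"
    and fa: "addhom M M' f" and fr: "rlin M M' f" and ga: "addhom N N' g" and gl: "llin N N' g"
begin

lemma good_tmap: "good M N (tens M' N') (\<lambda>(m, n). tel M' N' (f m) (g n))"
proof (rule goodI)
  fix m n assume mn: "m \<in> bm_car M" "n \<in> bm_car N"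
  then show "(case (m, n) of (m, n) \<Rightarrow> tel M' N' (f m) (g n)) \<in> bm_car (tens M' N')"
    unfolding case_prod_conv by (rule tel_car[OF addhomD1[OF fa] addhomD1[OF ga]])
next
  fix m m' n assume a: "m \<in> bm_car M" "m' \<in> bm_car M" "n \<in> bm_car N"
  show "(case (bm_plus M m m', n) of (m, n) \<Rightarrow> tel M' N' (f m) (g n)) =
     bm_plus (tens M' N') (case (m, n) of (m, n) \<Rightarrow> tel M' N' (f m) (g n))
      (case (m', n) of (m, n) \<Rightarrow> tel M' N' (f m) (g n))"
    unfolding case_prod_conv addhomD2[OF fa a(1,2)]
    by (rule tel_addl[OF M' N' addhomD1[OF fa a(1)] addhomD1[OF fa a(2)] addhomD1[OF ga a(3)]])
next
  fix m n n' assume a: "m \<in> bm_car M" "n \<in> bm_car N" "n' \<in> bm_car N"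
  show "(case (m, bm_plus N n n') of (m, n) \<Rightarrow> tel M' N' (f m) (g n)) =
     bm_plus (tens M' N') (case (m, n) of (m, n) \<Rightarrow> tel M' N' (f m) (g n))
      (case (m, n') of (m, n) \<Rightarrow> tel M' N' (f m) (g n))"
    unfolding case_prod_conv addhomD2[OF ga a(2,3)]
    by (rule tel_addr[OF M' N' addhomD1[OF fa a(1)] addhomD1[OF ga a(2)] addhomD1[OF ga a(3)]])
next
  fix a m n assume mn: "m \<in> bm_car M" "n \<in> bm_car N"
  show "(case (bm_ract M m a, n) of (m, n) \<Rightarrow> tel M' N' (f m) (g n)) =
     (case (m, bm_lact N a n) of (m, n) \<Rightarrow> tel M' N' (f m) (g n))"
    unfolding case_prod_conv rlinD[OF fr mn(1)] llinD[OF gl mn(2)]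
    by (rule tel_bal[OF M' N' addhomD1[OF fa mn(1)] addhomD1[OF ga mn(2)]])
qed

lemma tmap_tel: "m \<in> bm_car M \<Longrightarrow> n \<in> bm_car N \<Longrightarrow> tmap M' N' f g (tel M N m n) = tel M' N' (f m) (g n)"
  unfolding tmap_def by (simp add: lift_tel[OF M N abgrp_tens good_tmap])

lemma tmap_addhom: "addhom (tens M N) (tens M' N') (tmap M' N' f g)"
  unfolding tmap_def[abs_def] by (rule lift_addhom[OF M N abgrp_tens good_tmap])

lemma tmap_car: "u \<in> bm_car (tens M N) \<Longrightarrow> tmap M' N' f g u \<in> bm_car (tens M' N')"
  by (rule addhomD1[OF tmap_addhom])

end

lemma tmap_llin:
  fixes M :: "('x::ring_1, 'm, 'a::ring_1) bimod" and N :: "('a, 'n, 'y::ring_1) bimod"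
    and M' :: "('x, 'm2, 'a) bimod" and N' :: "('a, 'n2, 'y2::ring_1) bimod"
  assumes M: "bimodule M" and N: "bimodule N" and M': "bimodule M'" and N': "bimodule N'"
    and fa: "addhom M M' f" and fr: "rlin M M' f" and fl: "llin M M' f" and ga: "addhom N N' g" and gl: "llin N N' g"
  shows "llin (tens M N) (tens M' N') (tmap M' N' f g)"
  unfolding llin_def
proof (intro allI ballI)
  fix b u assume u: "u \<in> bm_car (tens M N)"
  note T = tmap_addhom[OF M N M' N' fa fr ga gl]
  show "tmap M' N' f g (bm_lact (tens M N) b u) = bm_lact (tens M' N') b (tmap M' N' f g u)"
    by (rule tens_ext[OF M N abgrp_tens addhom_comp[OF tens_lact_addhom[OF M N] T]
          addhom_comp[OF T tens_lact_addhom[OF M' N']] _ u])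
     (simp add: tens_lact_tel[OF M N] tmap_tel[OF M N M' N' fa fr ga gl] bm_lact_car[OF M]
        llinD[OF fl] tens_lact_tel[OF M' N'] addhomD1[OF fa] addhomD1[OF ga])
qed

lemma tmap_rlin:
  fixes M :: "('x::ring_1, 'm, 'a::ring_1) bimod" and N :: "('a, 'n, 'y::ring_1) bimod"
    and M' :: "('x2::ring_1, 'm2, 'a) bimod" and N' :: "('a, 'n2, 'y) bimod"
  assumes M: "bimodule M" and N: "bimodule N" and M': "bimodule M'" and N': "bimodule N'"
    and fa: "addhom M M' f" and fr: "rlin M M' f" and ga: "addhom N N' g" and gl: "llin N N' g" and gr: "rlin N N' g"
  shows "rlin (tens M N) (tens M' N') (tmap M' N' f g)"
  unfolding rlin_def
proof (intro allI ballI)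
  fix a u assume u: "u \<in> bm_car (tens M N)"
  note T = tmap_addhom[OF M N M' N' fa fr ga gl]
  show "tmap M' N' f g (bm_ract (tens M N) u a) = bm_ract (tens M' N') (tmap M' N' f g u) a"
    by (rule tens_ext[OF M N abgrp_tens addhom_comp[OF tens_ract_addhom[OF M N] T]
          addhom_comp[OF T tens_ract_addhom[OF M' N']] _ u])
     (simp add: tens_ract_tel[OF M N] tmap_tel[OF M N M' N' fa fr ga gl] bm_ract_car[OF N]
        rlinD[OF gr] tens_ract_tel[OF M' N'] addhomD1[OF fa] addhomD1[OF ga])
qed

lemma tmap_comp:
  fixes M :: "('x::ring_1, 'm, 'a::ring_1) bimod" and N :: "('a, 'n, 'y::ring_1) bimod"
    and M' :: "('x2::ring_1, 'm2, 'a) bimod" and N' :: "('a, 'n2, 'y2::ring_1) bimod"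
    and M'' :: "('x3::ring_1, 'm3, 'a) bimod" and N'' :: "('a, 'n3, 'y3::ring_1) bimod"
  assumes M: "bimodule M" and N: "bimodule N" and M': "bimodule M'" and N': "bimodule N'"
    and M'': "bimodule M''" and N'': "bimodule N''"
    and fa: "addhom M M' f" and fr: "rlin M M' f" and ga: "addhom N N' g" and gl: "llin N N' g"
    and fa2: "addhom M' M'' f2" and fr2: "rlin M' M'' f2" and ga2: "addhom N' N'' g2" and gl2: "llin N' N'' g2"
    and u: "u \<in> bm_car (tens M N)"
  shows "tmap M'' N'' f2 g2 (tmap M' N' f g u) = tmap M'' N'' (\<lambda>x. f2 (f x)) (\<lambda>x. g2 (g x)) u"
proof -
  note T1 = tmap_addhom[OF M N M' N' fa fr ga gl]
  note T2 = tmap_addhom[OF M' N' M'' N'' fa2 fr2 ga2 gl2]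
  note T3 = tmap_addhom[OF M N M'' N'' addhom_comp[OF fa fa2] rlin_comp[OF fa fr fr2]
      addhom_comp[OF ga ga2] llin_comp[OF ga gl gl2]]
  show ?thesis
    by (rule tens_ext[OF M N abgrp_tens addhom_comp[OF T1 T2] T3 _ u])
      (simp add: tmap_tel[OF M N M' N' fa fr ga gl] tmap_tel[OF M' N' M'' N'' fa2 fr2 ga2 gl2]
        tmap_tel[OF M N M'' N'' addhom_comp[OF fa fa2] rlin_comp[OF fa fr fr2]
      addhom_comp[OF ga ga2] llin_comp[OF ga gl gl2]] addhomD1[OF fa] addhomD1[OF ga])
qed

lemma tmap_id:
  assumes M: "bimodule M" and N: "bimodule N" and u: "u \<in> bm_car (tens M N)"
  shows "tmap M N (\<lambda>x. x) (\<lambda>x. x) u = u"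
  by (rule tens_ext[OF M N abgrp_tens tmap_addhom[OF M N M N addhom_id rlin_id addhom_id llin_id] addhom_id _ u])
    (simp add: tmap_tel[OF M N M N addhom_id rlin_id addhom_id llin_id])


section \<open>Associativity\<close>

lemma tens_ext2L:
  fixes M :: "('x::ring_1, 'm, 'a::ring_1) bimod" and N :: "('a, 'n, 'b::ring_1) bimod"
    and P :: "('b, 'p, 'y::ring_1) bimod"
  assumes M: "bimodule M" and N: "bimodule N" and P: "bimodule P" and G: "abgrp Q"
    and F: "addhom (tens (tens M N) P) Q F" and H: "addhom (tens (tens M N) P) Q H"
    and t: "\<And>m n p. m \<in> bm_car M \<Longrightarrow> n \<in> bm_car N \<Longrightarrow> p \<in> bm_car P \<Longrightarrow>
        F (tel (tens M N) P (tel M N m n) p) = H (tel (tens M N) P (tel M N m n) p)"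
    and u: "u \<in> bm_car (tens (tens M N) P)"
  shows "F u = H u"
proof (rule tens_ext[OF bimodule_tens[OF M N] P G F H _ u])
  fix w p assume w: "w \<in> bm_car (tens M N)" and p: "p \<in> bm_car P"
  show "F (tel (tens M N) P w p) = H (tel (tens M N) P w p)"
    by (rule tens_ext[OF M N G addhom_comp[OF tel_addhom_left[OF bimodule_tens[OF M N] P p] F]
          addhom_comp[OF tel_addhom_left[OF bimodule_tens[OF M N] P p] H] _ w])
      (rule t[OF _ _ p])
qed

lemma tens_ext2R:
  fixes M :: "('x::ring_1, 'm, 'a::ring_1) bimod" and N :: "('a, 'n, 'b::ring_1) bimod"
    and P :: "('b, 'p, 'y::ring_1) bimod"
  assumes M: "bimodule M" and N: "bimodule N" and P: "bimodule P" and G: "abgrp Q"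
    and F: "addhom (tens M (tens N P)) Q F" and H: "addhom (tens M (tens N P)) Q H"
    and t: "\<And>m n p. m \<in> bm_car M \<Longrightarrow> n \<in> bm_car N \<Longrightarrow> p \<in> bm_car P \<Longrightarrow>
        F (tel M (tens N P) m (tel N P n p)) = H (tel M (tens N P) m (tel N P n p))"
    and u: "u \<in> bm_car (tens M (tens N P))"
  shows "F u = H u"
proof (rule tens_ext[OF M bimodule_tens[OF N P] G F H _ u])
  fix m w assume m: "m \<in> bm_car M" and w: "w \<in> bm_car (tens N P)"
  show "F (tel M (tens N P) m w) = H (tel M (tens N P) m w)"
    by (rule tens_ext[OF N P G addhom_comp[OF tel_addhom_right[OF M bimodule_tens[OF N P] m] F]
          addhom_comp[OF tel_addhom_right[OF M bimodule_tens[OF N P] m] H] _ w])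
      (rule t[OF m])
qed

context
  fixes M :: "('x::ring_1, 'm, 'a::ring_1) bimod" and N :: "('a, 'n, 'b::ring_1) bimod"
    and P :: "('b, 'p, 'y::ring_1) bimod"
  assumes M: "bimodule M" and N: "bimodule N" and P: "bimodule P"
begin

lemma good_assocR_in: "p \<in> bm_car P \<Longrightarrow>
  good M N (tens M (tens N P)) (\<lambda>(m, n). tel M (tens N P) m (tel N P n p))"
proof (rule goodI)
  assume p: "p \<in> bm_car P"
  fix m n assume mn: "m \<in> bm_car M" "n \<in> bm_car N"
  show "(case (m, n) of (m, n) \<Rightarrow> tel M (tens N P) m (tel N P n p)) \<in> bm_car (tens M (tens N P))"
    unfolding case_prod_conv by (rule tel_car[OF mn(1) tel_car[OF mn(2) p]])
next
  assume p: "p \<in> bm_car P"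
  fix m m' n assume a: "m \<in> bm_car M" "m' \<in> bm_car M" "n \<in> bm_car N"
  show "(case (bm_plus M m m', n) of (m, n) \<Rightarrow> tel M (tens N P) m (tel N P n p)) =
    bm_plus (tens M (tens N P)) (case (m, n) of (m, n) \<Rightarrow> tel M (tens N P) m (tel N P n p))
     (case (m', n) of (m, n) \<Rightarrow> tel M (tens N P) m (tel N P n p))"
    unfolding case_prod_conv by (rule tel_addl[OF M bimodule_tens[OF N P] a(1,2) tel_car[OF a(3) p]])
next
  assume p: "p \<in> bm_car P"
  fix m n n' assume a: "m \<in> bm_car M" "n \<in> bm_car N" "n' \<in> bm_car N"
  show "(case (m, bm_plus N n n') of (m, n) \<Rightarrow> tel M (tens N P) m (tel N P n p)) =
    bm_plus (tens M (tens N P)) (case (m, n) of (m, n) \<Rightarrow> tel M (tens N P) m (tel N P n p))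
     (case (m, n') of (m, n) \<Rightarrow> tel M (tens N P) m (tel N P n p))"
    unfolding case_prod_conv tel_addl[OF N P a(2,3) p]
    by (rule tel_addr[OF M bimodule_tens[OF N P] a(1) tel_car[OF a(2) p] tel_car[OF a(3) p]])
next
  assume p: "p \<in> bm_car P"
  fix a m n assume mn: "m \<in> bm_car M" "n \<in> bm_car N"
  show "(case (bm_ract M m a, n) of (m, n) \<Rightarrow> tel M (tens N P) m (tel N P n p)) =
    (case (m, bm_lact N a n) of (m, n) \<Rightarrow> tel M (tens N P) m (tel N P n p))"
    unfolding case_prod_conv tel_bal[OF M bimodule_tens[OF N P] mn(1) tel_car[OF mn(2) p]]
      tens_lact_tel[OF N P mn(2) p] ..
qed

definition aRin :: "'p \<Rightarrow> ('m, 'n) tns \<Rightarrow> ('m, ('n, 'p) tns) tns" where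
  "aRin p u = lift (tens M (tens N P)) (\<lambda>(m, n). tel M (tens N P) m (tel N P n p)) u"

lemma aRin_addhom: "p \<in> bm_car P \<Longrightarrow> addhom (tens M N) (tens M (tens N P)) (aRin p)"
  unfolding aRin_def[abs_def] by (rule lift_addhom[OF M N abgrp_tens good_assocR_in])

lemma aRin_tel: "m \<in> bm_car M \<Longrightarrow> n \<in> bm_car N \<Longrightarrow> p \<in> bm_car P \<Longrightarrow>
  aRin p (tel M N m n) = tel M (tens N P) m (tel N P n p)"
  unfolding aRin_def by (simp add: lift_tel[OF M N abgrp_tens good_assocR_in])

lemma good_assocR: "good (tens M N) P (tens M (tens N P)) (\<lambda>(u, p). aRin p u)"
proof (rule goodI)
  fix u p assume up: "u \<in> bm_car (tens M N)" "p \<in> bm_car P"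
  show "(case (u, p) of (u, p) \<Rightarrow> aRin p u) \<in> bm_car (tens M (tens N P))"
    unfolding case_prod_conv by (rule addhomD1[OF aRin_addhom[OF up(2)] up(1)])
next
  fix u u' p assume a: "u \<in> bm_car (tens M N)" "u' \<in> bm_car (tens M N)" "p \<in> bm_car P"
  show "(case (bm_plus (tens M N) u u', p) of (u, p) \<Rightarrow> aRin p u) =
    bm_plus (tens M (tens N P)) (case (u, p) of (u, p) \<Rightarrow> aRin p u) (case (u', p) of (u, p) \<Rightarrow> aRin p u)"
    unfolding case_prod_conv by (rule addhomD2[OF aRin_addhom[OF a(3)] a(1,2)])
next
  fix u p p' assume a: "u \<in> bm_car (tens M N)" "p \<in> bm_car P" "p' \<in> bm_car P"
  have pp: "bm_plus P p p' \<in> bm_car P" by (rule ag_plus[OF bimodule_abgrp[OF P] a(2,3)])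
  show "(case (u, bm_plus P p p') of (u, p) \<Rightarrow> aRin p u) =
    bm_plus (tens M (tens N P)) (case (u, p) of (u, p) \<Rightarrow> aRin p u) (case (u, p') of (u, p) \<Rightarrow> aRin p u)"
    unfolding case_prod_conv
    by (rule tens_ext[OF M N abgrp_tens aRin_addhom[OF pp]
          addhom_plus[OF abgrp_tens aRin_addhom[OF a(2)] aRin_addhom[OF a(3)]] _ a(1)])
      (simp add: aRin_tel pp a tel_addr[OF N P] tel_addr[OF M bimodule_tens[OF N P]] tel_car)
next
  fix b u p assume up: "u \<in> bm_car (tens M N)" "p \<in> bm_car P"
  have bp: "bm_lact P b p \<in> bm_car P" by (rule bm_lact_car[OF P up(2)])
  show "(case (bm_ract (tens M N) u b, p) of (u, p) \<Rightarrow> aRin p u) =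
    (case (u, bm_lact P b p) of (u, p) \<Rightarrow> aRin p u)"
    unfolding case_prod_conv
    by (rule tens_ext[OF M N abgrp_tens addhom_comp[OF tens_ract_addhom[OF M N] aRin_addhom[OF up(2)]]
          aRin_addhom[OF bp] _ up(1)])
      (simp add: aRin_tel up bp tens_ract_tel[OF M N] bm_ract_car[OF N] tel_bal[OF N P])
qed

lemma assocR_eq: "assocR M N P t = lift (tens M (tens N P)) (\<lambda>(u, p). aRin p u) t"
  unfolding assocR_def aRin_def ..

lemma assocR_addhom: "addhom (tens (tens M N) P) (tens M (tens N P)) (assocR M N P)"
  unfolding assocR_eq[abs_def] by (rule lift_addhom[OF bimodule_tens[OF M N] P abgrp_tens good_assocR])

lemma assocR_car: "u \<in> bm_car (tens (tens M N) P) \<Longrightarrow> assocR M N P u \<in> bm_car (tens M (tens N P))"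
  by (rule addhomD1[OF assocR_addhom])

lemma assocR_tel: "m \<in> bm_car M \<Longrightarrow> n \<in> bm_car N \<Longrightarrow> p \<in> bm_car P \<Longrightarrow>
  assocR M N P (tel (tens M N) P (tel M N m n) p) = tel M (tens N P) m (tel N P n p)"
  unfolding assocR_eq
  by (simp add: lift_tel[OF bimodule_tens[OF M N] P abgrp_tens good_assocR] tel_car aRin_tel)

lemma assocR_llin: "llin (tens (tens M N) P) (tens M (tens N P)) (assocR M N P)"
  unfolding llin_def
proof (intro allI ballI)
  fix b u assume u: "u \<in> bm_car (tens (tens M N) P)"
  show "assocR M N P (bm_lact (tens (tens M N) P) b u) = bm_lact (tens M (tens N P)) b (assocR M N P u)"
    by (rule tens_ext2L[OF M N P abgrp_tens
          addhom_comp[OF tens_lact_addhom[OF bimodule_tens[OF M N] P] assocR_addhom]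
          addhom_comp[OF assocR_addhom tens_lact_addhom[OF M bimodule_tens[OF N P]]] _ u])
      (simp add: tens_lact_tel[OF bimodule_tens[OF M N] P] tens_lact_tel[OF M N] tel_car
         assocR_tel bm_lact_car[OF M] tens_lact_tel[OF M bimodule_tens[OF N P]])
qed

lemma assocR_rlin: "rlin (tens (tens M N) P) (tens M (tens N P)) (assocR M N P)"
  unfolding rlin_def
proof (intro allI ballI)
  fix a u assume u: "u \<in> bm_car (tens (tens M N) P)"
  show "assocR M N P (bm_ract (tens (tens M N) P) u a) = bm_ract (tens M (tens N P)) (assocR M N P u) a"
    by (rule tens_ext2L[OF M N P abgrp_tens
          addhom_comp[OF tens_ract_addhom[OF bimodule_tens[OF M N] P] assocR_addhom]
          addhom_comp[OF assocR_addhom tens_ract_addhom[OF M bimodule_tens[OF N P]]] _ u])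
      (simp add: tens_ract_tel[OF bimodule_tens[OF M N] P] tens_ract_tel[OF N P] tel_car
         assocR_tel bm_ract_car[OF P] tens_ract_tel[OF M bimodule_tens[OF N P]])
qed

end


context
  fixes M :: "('x::ring_1, 'm, 'a::ring_1) bimod" and N :: "('a, 'n, 'b::ring_1) bimod"
    and P :: "('b, 'p, 'y::ring_1) bimod"
  assumes M: "bimodule M" and N: "bimodule N" and P: "bimodule P"
begin

lemma good_assocL_in: "m \<in> bm_car M \<Longrightarrow>
  good N P (tens (tens M N) P) (\<lambda>(n, p). tel (tens M N) P (tel M N m n) p)"
proof (rule goodI)
  assume m: "m \<in> bm_car M"
  fix n p assume np: "n \<in> bm_car N" "p \<in> bm_car P"
  show "(case (n, p) of (n, p) \<Rightarrow> tel (tens M N) P (tel M N m n) p) \<in> bm_car (tens (tens M N) P)"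
    unfolding case_prod_conv by (rule tel_car[OF tel_car[OF m np(1)] np(2)])
next
  assume m: "m \<in> bm_car M"
  fix n n' p assume a: "n \<in> bm_car N" "n' \<in> bm_car N" "p \<in> bm_car P"
  show "(case (bm_plus N n n', p) of (n, p) \<Rightarrow> tel (tens M N) P (tel M N m n) p) =
    bm_plus (tens (tens M N) P) (case (n, p) of (n, p) \<Rightarrow> tel (tens M N) P (tel M N m n) p)
     (case (n', p) of (n, p) \<Rightarrow> tel (tens M N) P (tel M N m n) p)"
    unfolding case_prod_conv tel_addr[OF M N m a(1,2)]
    by (rule tel_addl[OF bimodule_tens[OF M N] P tel_car[OF m a(1)] tel_car[OF m a(2)] a(3)])
next
  assume m: "m \<in> bm_car M"
  fix n p p' assume a: "n \<in> bm_car N" "p \<in> bm_car P" "p' \<in> bm_car P"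
  show "(case (n, bm_plus P p p') of (n, p) \<Rightarrow> tel (tens M N) P (tel M N m n) p) =
    bm_plus (tens (tens M N) P) (case (n, p) of (n, p) \<Rightarrow> tel (tens M N) P (tel M N m n) p)
     (case (n, p') of (n, p) \<Rightarrow> tel (tens M N) P (tel M N m n) p)"
    unfolding case_prod_conv by (rule tel_addr[OF bimodule_tens[OF M N] P tel_car[OF m a(1)] a(2,3)])
next
  assume m: "m \<in> bm_car M"
  fix b n p assume np: "n \<in> bm_car N" "p \<in> bm_car P"
  show "(case (bm_ract N n b, p) of (n, p) \<Rightarrow> tel (tens M N) P (tel M N m n) p) =
    (case (n, bm_lact P b p) of (n, p) \<Rightarrow> tel (tens M N) P (tel M N m n) p)"
    unfolding case_prod_conv tens_ract_tel[OF M N m np(1), symmetric]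
    by (rule tel_bal[OF bimodule_tens[OF M N] P tel_car[OF m np(1)] np(2)])
qed

definition aLin :: "'m \<Rightarrow> ('n, 'p) tns \<Rightarrow> (('m, 'n) tns, 'p) tns" where
  "aLin m v = lift (tens (tens M N) P) (\<lambda>(n, p). tel (tens M N) P (tel M N m n) p) v"

lemma aLin_addhom: "m \<in> bm_car M \<Longrightarrow> addhom (tens N P) (tens (tens M N) P) (aLin m)"
  unfolding aLin_def[abs_def] by (rule lift_addhom[OF N P abgrp_tens good_assocL_in])

lemma aLin_tel: "m \<in> bm_car M \<Longrightarrow> n \<in> bm_car N \<Longrightarrow> p \<in> bm_car P \<Longrightarrow>
  aLin m (tel N P n p) = tel (tens M N) P (tel M N m n) p"
  unfolding aLin_def by (simp add: lift_tel[OF N P abgrp_tens good_assocL_in])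

lemma good_assocL: "good M (tens N P) (tens (tens M N) P) (\<lambda>(m, v). aLin m v)"
proof (rule goodI)
  fix m v assume mv: "m \<in> bm_car M" "v \<in> bm_car (tens N P)"
  show "(case (m, v) of (m, v) \<Rightarrow> aLin m v) \<in> bm_car (tens (tens M N) P)"
    unfolding case_prod_conv by (rule addhomD1[OF aLin_addhom[OF mv(1)] mv(2)])
next
  fix m m' v assume a: "m \<in> bm_car M" "m' \<in> bm_car M" "v \<in> bm_car (tens N P)"
  have mm: "bm_plus M m m' \<in> bm_car M" by (rule ag_plus[OF bimodule_abgrp[OF M] a(1,2)])
  show "(case (bm_plus M m m', v) of (m, v) \<Rightarrow> aLin m v) =
    bm_plus (tens (tens M N) P) (case (m, v) of (m, v) \<Rightarrow> aLin m v) (case (m', v) of (m, v) \<Rightarrow> aLin m v)"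
    unfolding case_prod_conv
    by (rule tens_ext[OF N P abgrp_tens aLin_addhom[OF mm]
          addhom_plus[OF abgrp_tens aLin_addhom[OF a(1)] aLin_addhom[OF a(2)]] _ a(3)])
      (simp add: aLin_tel mm a tel_addl[OF M N] tel_addl[OF bimodule_tens[OF M N] P] tel_car)
next
  fix m v v' assume a: "m \<in> bm_car M" "v \<in> bm_car (tens N P)" "v' \<in> bm_car (tens N P)"
  show "(case (m, bm_plus (tens N P) v v') of (m, v) \<Rightarrow> aLin m v) =
    bm_plus (tens (tens M N) P) (case (m, v) of (m, v) \<Rightarrow> aLin m v) (case (m, v') of (m, v) \<Rightarrow> aLin m v)"
    unfolding case_prod_conv by (rule addhomD2[OF aLin_addhom[OF a(1)] a(2,3)])
next
  fix a m v assume mv: "m \<in> bm_car M" "v \<in> bm_car (tens N P)"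
  have ma: "bm_ract M m a \<in> bm_car M" by (rule bm_ract_car[OF M mv(1)])
  show "(case (bm_ract M m a, v) of (m, v) \<Rightarrow> aLin m v) =
    (case (m, bm_lact (tens N P) a v) of (m, v) \<Rightarrow> aLin m v)"
    unfolding case_prod_conv
    by (rule tens_ext[OF N P abgrp_tens aLin_addhom[OF ma]
          addhom_comp[OF tens_lact_addhom[OF N P] aLin_addhom[OF mv(1)]] _ mv(2)])
      (simp add: aLin_tel mv ma tens_lact_tel[OF N P] bm_lact_car[OF N] tel_bal[OF M N])
qed

lemma assocL_eq: "assocL M N P t = lift (tens (tens M N) P) (\<lambda>(m, v). aLin m v) t"
  unfolding assocL_def aLin_def ..

lemma assocL_addhom: "addhom (tens M (tens N P)) (tens (tens M N) P) (assocL M N P)"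
  unfolding assocL_eq[abs_def] by (rule lift_addhom[OF M bimodule_tens[OF N P] abgrp_tens good_assocL])

lemma assocL_car: "u \<in> bm_car (tens M (tens N P)) \<Longrightarrow> assocL M N P u \<in> bm_car (tens (tens M N) P)"
  by (rule addhomD1[OF assocL_addhom])

lemma assocL_tel: "m \<in> bm_car M \<Longrightarrow> n \<in> bm_car N \<Longrightarrow> p \<in> bm_car P \<Longrightarrow>
  assocL M N P (tel M (tens N P) m (tel N P n p)) = tel (tens M N) P (tel M N m n) p"
  unfolding assocL_eq
  by (simp add: lift_tel[OF M bimodule_tens[OF N P] abgrp_tens good_assocL] tel_car aLin_tel)

end

lemma bm_lact_addhom: "bimodule M \<Longrightarrow> addhom M M (bm_lact M b)"
  by (rule addhomI) (simp_all add: bm_lact_car bm_lact_plus)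

lemma bm_ract_addhom: "bimodule M \<Longrightarrow> addhom M M (\<lambda>m. bm_ract M m a)"
  by (rule addhomI) (simp_all add: bm_ract_car bm_ract_plus)

lemma ringmod_simps[simp]: "bm_car ringmod = UNIV" "bm_plus ringmod = (+)" "bm_lact ringmod = (*)"
  "bm_ract ringmod = (*)" "bm_zero ringmod = 0" "bm_neg ringmod = uminus"
  by (simp_all add: ringmod_def)

context
  fixes X :: "('u::ring_1, 'd, 'b::ring_1) bimod" and M :: "('b, 'm, 'a::ring_1) bimod"
    and e :: "'d \<Rightarrow> 'b"
  assumes X: "bimodule X" and M: "bimodule M" and ea: "addhom X ringmod e" and er: "rlin X ringmod e"
begin

lemma good_lact_by: "good X M M (\<lambda>(x, m). bm_lact M (e x) m)"
proof (rule goodI)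
  fix x m assume "x \<in> bm_car X" "m \<in> bm_car M"
  then show "(case (x, m) of (x, m) \<Rightarrow> bm_lact M (e x) m) \<in> bm_car M"
    by (simp add: bm_lact_car[OF M])
next
  fix x x' m assume a: "x \<in> bm_car X" "x' \<in> bm_car X" "m \<in> bm_car M"
  show "(case (bm_plus X x x', m) of (x, m) \<Rightarrow> bm_lact M (e x) m) =
    bm_plus M (case (x, m) of (x, m) \<Rightarrow> bm_lact M (e x) m) (case (x', m) of (x, m) \<Rightarrow> bm_lact M (e x) m)"
    using addhomD2[OF ea a(1,2)] by (simp add: bm_lact_add[OF M a(3)])
next
  fix x m m' assume a: "x \<in> bm_car X" "m \<in> bm_car M" "m' \<in> bm_car M"
  show "(case (x, bm_plus M m m') of (x, m) \<Rightarrow> bm_lact M (e x) m) =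
    bm_plus M (case (x, m) of (x, m) \<Rightarrow> bm_lact M (e x) m) (case (x, m') of (x, m) \<Rightarrow> bm_lact M (e x) m)"
    by (simp add: bm_lact_plus[OF M a(2,3)])
next
  fix b x m assume a: "x \<in> bm_car X" "m \<in> bm_car M"
  show "(case (bm_ract X x b, m) of (x, m) \<Rightarrow> bm_lact M (e x) m) =
    (case (x, bm_lact M b m) of (x, m) \<Rightarrow> bm_lact M (e x) m)"
    using rlinD[OF er a(1), of b] by (simp add: bm_lact_mult[OF M a(2)])
qed

lemma lact_by_tel: "x \<in> bm_car X \<Longrightarrow> m \<in> bm_car M \<Longrightarrow> lact_by M e (tel X M x m) = bm_lact M (e x) m"
  unfolding lact_by_def by (simp add: lift_tel[OF X M bimodule_abgrp[OF M] good_lact_by])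

lemma lact_by_addhom: "addhom (tens X M) M (lact_by M e)"
  unfolding lact_by_def[abs_def] by (rule lift_addhom[OF X M bimodule_abgrp[OF M] good_lact_by])

lemma lact_by_rlin: "rlin (tens X M) M (lact_by M e)"
  unfolding rlin_def
proof (intro allI ballI)
  fix a u assume u: "u \<in> bm_car (tens X M)"
  show "lact_by M e (bm_ract (tens X M) u a) = bm_ract M (lact_by M e u) a"
    by (rule tens_ext[OF X M bimodule_abgrp[OF M] addhom_comp[OF tens_ract_addhom[OF X M] lact_by_addhom]
          addhom_comp[OF lact_by_addhom bm_ract_addhom[OF M]] _ u])
      (simp add: tens_ract_tel[OF X M] lact_by_tel bm_ract_car[OF M] bm_compat[OF M])
qed

lemma lact_by_car: "u \<in> bm_car (tens X M) \<Longrightarrow> lact_by M e u \<in> bm_car M"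
  by (rule addhomD1[OF lact_by_addhom])

end

lemma lact_by_llin:
  fixes X :: "('b::ring_1, 'd, 'b) bimod" and M :: "('b, 'm, 'a::ring_1) bimod"
  assumes X: "bimodule X" and M: "bimodule M" and ea: "addhom X ringmod e" and er: "rlin X ringmod e"
    and el: "llin X ringmod e"
  shows "llin (tens X M) M (lact_by M e)"
  unfolding llin_def
proof (intro allI ballI)
  fix b u assume u: "u \<in> bm_car (tens X M)"
  show "lact_by M e (bm_lact (tens X M) b u) = bm_lact M b (lact_by M e u)"
    by (rule tens_ext[OF X M bimodule_abgrp[OF M] addhom_comp[OF tens_lact_addhom[OF X M] lact_by_addhom[OF X M ea er]]
          addhom_comp[OF lact_by_addhom[OF X M ea er] bm_lact_addhom[OF M]] _ u])
      (simp add: tens_lact_tel[OF X M] lact_by_tel[OF X M ea er] bm_lact_car[OF X] llinD[OF el]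
         bm_lact_mult[OF M])
qed

context
  fixes X :: "('a::ring_1, 'd, 'u::ring_1) bimod" and M :: "('b::ring_1, 'm, 'a) bimod"
    and e :: "'d \<Rightarrow> 'a"
  assumes X: "bimodule X" and M: "bimodule M" and ea: "addhom X ringmod e" and el: "llin X ringmod e"
begin

lemma good_ract_by: "good M X M (\<lambda>(m, x). bm_ract M m (e x))"
proof (rule goodI)
  fix m x assume "m \<in> bm_car M" "x \<in> bm_car X"
  then show "(case (m, x) of (m, x) \<Rightarrow> bm_ract M m (e x)) \<in> bm_car M"
    by (simp add: bm_ract_car[OF M])
next
  fix m m' x assume a: "m \<in> bm_car M" "m' \<in> bm_car M" "x \<in> bm_car X"
  show "(case (bm_plus M m m', x) of (m, x) \<Rightarrow> bm_ract M m (e x)) =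
    bm_plus M (case (m, x) of (m, x) \<Rightarrow> bm_ract M m (e x)) (case (m', x) of (m, x) \<Rightarrow> bm_ract M m (e x))"
    by (simp add: bm_ract_plus[OF M a(1,2)])
next
  fix m x x' assume a: "m \<in> bm_car M" "x \<in> bm_car X" "x' \<in> bm_car X"
  show "(case (m, bm_plus X x x') of (m, x) \<Rightarrow> bm_ract M m (e x)) =
    bm_plus M (case (m, x) of (m, x) \<Rightarrow> bm_ract M m (e x)) (case (m, x') of (m, x) \<Rightarrow> bm_ract M m (e x))"
    using addhomD2[OF ea a(2,3)] by (simp add: bm_ract_add[OF M a(1)])
next
  fix a m x assume mx: "m \<in> bm_car M" "x \<in> bm_car X"
  show "(case (bm_ract M m a, x) of (m, x) \<Rightarrow> bm_ract M m (e x)) =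
    (case (m, bm_lact X a x) of (m, x) \<Rightarrow> bm_ract M m (e x))"
    using llinD[OF el mx(2), of a] by (simp add: bm_ract_mult[OF M mx(1)])
qed

lemma ract_by_tel: "m \<in> bm_car M \<Longrightarrow> x \<in> bm_car X \<Longrightarrow> ract_by M e (tel M X m x) = bm_ract M m (e x)"
  unfolding ract_by_def by (simp add: lift_tel[OF M X bimodule_abgrp[OF M] good_ract_by])

lemma ract_by_addhom: "addhom (tens M X) M (ract_by M e)"
  unfolding ract_by_def[abs_def] by (rule lift_addhom[OF M X bimodule_abgrp[OF M] good_ract_by])

end


lemma assocL_llin:
  fixes M :: "('x::ring_1, 'm, 'a::ring_1) bimod" and N :: "('a, 'n, 'b::ring_1) bimod"
    and P :: "('b, 'p, 'y::ring_1) bimod"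
  assumes M: "bimodule M" and N: "bimodule N" and P: "bimodule P"
  shows "llin (tens M (tens N P)) (tens (tens M N) P) (assocL M N P)"
  unfolding llin_def
proof (intro allI ballI)
  fix b u assume u: "u \<in> bm_car (tens M (tens N P))"
  show "assocL M N P (bm_lact (tens M (tens N P)) b u) = bm_lact (tens (tens M N) P) b (assocL M N P u)"
    by (rule tens_ext2R[OF M N P abgrp_tens
          addhom_comp[OF tens_lact_addhom[OF M bimodule_tens[OF N P]] assocL_addhom[OF M N P]]
          addhom_comp[OF assocL_addhom[OF M N P] tens_lact_addhom[OF bimodule_tens[OF M N] P]] _ u])
      (simp add: tens_lact_tel[OF M bimodule_tens[OF N P]] tens_lact_tel[OF M N] tel_car
         assocL_tel[OF M N P] bm_lact_car[OF M] tens_lact_tel[OF bimodule_tens[OF M N] P])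
qed

lemma assocR_nat3:
  fixes M :: "('x::ring_1, 'm, 'a::ring_1) bimod" and N :: "('a, 'n, 'b::ring_1) bimod"
    and P :: "('b, 'p, 'y::ring_1) bimod" and P' :: "('b, 'p2, 'y2::ring_1) bimod"
  assumes M: "bimodule M" and N: "bimodule N" and P: "bimodule P" and P': "bimodule P'"
    and ha: "addhom P P' h" and hl: "llin P P' h"
    and w: "w \<in> bm_car (tens (tens M N) P)"
  shows "assocR M N P' (tmap (tens M N) P' (\<lambda>x. x) h w)
       = tmap M (tens N P') (\<lambda>x. x) (tmap N P' (\<lambda>x. x) h) (assocR M N P w)"
proof -
  note MN = bimodule_tens[OF M N]
  note T1 = tmap_addhom[OF MN P MN P' addhom_id rlin_id ha hl]
  note T2a = tmap_addhom[OF N P N P' addhom_id rlin_id ha hl]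
  note T2l = tmap_llin[OF N P N P' addhom_id rlin_id llin_id ha hl]
  note T2 = tmap_addhom[OF M bimodule_tens[OF N P] M bimodule_tens[OF N P'] addhom_id rlin_id T2a T2l]
  show ?thesis
    by (rule tens_ext2L[OF M N P abgrp_tens addhom_comp[OF T1 assocR_addhom[OF M N P']]
          addhom_comp[OF assocR_addhom[OF M N P] T2] _ w])
      (simp add: tmap_tel[OF MN P MN P' addhom_id rlin_id ha hl] tel_car addhomD1[OF ha]
        assocR_tel[OF M N P'] assocR_tel[OF M N P]
        tmap_tel[OF M bimodule_tens[OF N P] M bimodule_tens[OF N P'] addhom_id rlin_id T2a T2l]
        tmap_tel[OF N P N P' addhom_id rlin_id ha hl])
qed

section \<open>Coring identities\<close>

locale corg =
  fixes D :: "('b::ring_1, 'd, 'b) bimod" and \<Delta> :: "'d \<Rightarrow> ('d, 'd) tns" and \<epsilon> :: "'d \<Rightarrow> 'b"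
  assumes D: "bimodule D" and \<Delta>h: "bimod_hom D (tens D D) \<Delta>" and \<epsilon>h: "bimod_hom D ringmod \<epsilon>"
    and coass: "\<And>c. c \<in> bm_car D \<Longrightarrow> tmap D (tens D D) id \<Delta> (\<Delta> c) = assocR D D D (tmap (tens D D) D \<Delta> id (\<Delta> c))"
    and cuL: "\<And>c. c \<in> bm_car D \<Longrightarrow> lact_by D \<epsilon> (\<Delta> c) = c"
    and cuR: "\<And>c. c \<in> bm_car D \<Longrightarrow> ract_by D \<epsilon> (\<Delta> c) = c"
begin

lemma \<Delta>a: "addhom D (tens D D) \<Delta>" and \<Delta>l: "llin D (tens D D) \<Delta>" and \<Delta>r: "rlin D (tens D D) \<Delta>"
  using \<Delta>h by (simp_all add: bimod_hom_iff)
lemma \<epsilon>a: "addhom D ringmod \<epsilon>" and \<epsilon>l: "llin D ringmod \<epsilon>" and \<epsilon>r: "rlin D ringmod \<epsilon>"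
  using \<epsilon>h by (simp_all add: bimod_hom_iff)

lemmas DD = bimodule_tens[OF D D]

lemma \<Delta>car: "d \<in> bm_car D \<Longrightarrow> \<Delta> d \<in> bm_car (tens D D)"
  by (rule addhomD1[OF \<Delta>a])


lemma coactL_eq: "coactL D \<Delta> X x = assocR D D X (tmap (tens D D) X \<Delta> (\<lambda>x. x) x)"
  by (simp add: coactL_def id_def)

context
  fixes X :: "('b, 'x, 'a::ring_1) bimod"
  assumes X: "bimodule X"
begin

lemma L1a: "addhom (tens D X) (tens (tens D D) X) (tmap (tens D D) X \<Delta> (\<lambda>x. x))"
  by (rule tmap_addhom[OF D X DD X \<Delta>a \<Delta>r addhom_id llin_id])

lemma coactL_addhom: "addhom (tens D X) (tens D (tens D X)) (coactL D \<Delta> X)"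
  unfolding coactL_eq by (rule addhom_comp[OF L1a assocR_addhom[OF D D X]])

lemma coactL_llin: "llin (tens D X) (tens D (tens D X)) (coactL D \<Delta> X)"
  unfolding coactL_eq
  by (rule llin_comp[OF L1a tmap_llin[OF D X DD X \<Delta>a \<Delta>r \<Delta>l addhom_id llin_id] assocR_llin[OF D D X]])

lemma coactL_rlin: "rlin (tens D X) (tens D (tens D X)) (coactL D \<Delta> X)"
  unfolding coactL_eq
  by (rule rlin_comp[OF L1a tmap_rlin[OF D X DD X \<Delta>a \<Delta>r addhom_id llin_id rlin_id] assocR_rlin[OF D D X]])

lemma coactL_car: "u \<in> bm_car (tens D X) \<Longrightarrow> coactL D \<Delta> X u \<in> bm_car (tens D (tens D X))"
  by (rule addhomD1[OF coactL_addhom])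

lemma coactL_tel: "d \<in> bm_car D \<Longrightarrow> x \<in> bm_car X \<Longrightarrow>
  coactL D \<Delta> X (tel D X d x) = assocR D D X (tel (tens D D) X (\<Delta> d) x)"
  unfolding coactL_eq by (simp add: tmap_tel[OF D X DD X \<Delta>a \<Delta>r addhom_id llin_id])

lemma counitL:
  assumes u: "u \<in> bm_car (tens D X)"
  shows "lact_by (tens D X) \<epsilon> (coactL D \<Delta> X u) = u"
proof -
  note DX = bimodule_tens[OF D X]
  note LB = lact_by_addhom[OF D DX \<epsilon>a \<epsilon>r]
  note LBD = lact_by_addhom[OF D D \<epsilon>a \<epsilon>r]
  have inner: "lact_by (tens D X) \<epsilon> (assocR D D X (tel (tens D D) X w x)) = tel D X (lact_by D \<epsilon> w) x"
    if w: "w \<in> bm_car (tens D D)" and x: "x \<in> bm_car X" for w x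
    by (rule tens_ext[OF D D abgrp_tens
          addhom_comp[OF addhom_comp[OF tel_addhom_left[OF DD X x] assocR_addhom[OF D D X]] LB]
          addhom_comp[OF LBD tel_addhom_left[OF D X x]] _ w])
      (simp add: assocR_tel[OF D D X] x lact_by_tel[OF D DX \<epsilon>a \<epsilon>r] tel_car
         tens_lact_tel[OF D X] lact_by_tel[OF D D \<epsilon>a \<epsilon>r])
  show ?thesis
    by (rule tens_ext[OF D X abgrp_tens addhom_comp[OF coactL_addhom LB] addhom_id _ u])
      (simp add: coactL_tel inner \<Delta>car cuL)
qed

lemma counitR:
  assumes u: "u \<in> bm_car (tens D X)"
  shows "tmap D X (\<lambda>x. x) (lact_by X \<epsilon>) (coactL D \<Delta> X u) = u"
proof -
  note DX = bimodule_tens[OF D X]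
  note LB = lact_by_addhom[OF D X \<epsilon>a \<epsilon>r]
  note LBl = lact_by_llin[OF D X \<epsilon>a \<epsilon>r \<epsilon>l]
  note TM = tmap_addhom[OF D DX D X addhom_id rlin_id LB LBl]
  note RBD = ract_by_addhom[OF D D \<epsilon>a \<epsilon>l]
  have inner: "tmap D X (\<lambda>x. x) (lact_by X \<epsilon>) (assocR D D X (tel (tens D D) X w x)) = tel D X (ract_by D \<epsilon> w) x"
    if w: "w \<in> bm_car (tens D D)" and x: "x \<in> bm_car X" for w x
    by (rule tens_ext[OF D D abgrp_tens
          addhom_comp[OF addhom_comp[OF tel_addhom_left[OF DD X x] assocR_addhom[OF D D X]] TM]
          addhom_comp[OF RBD tel_addhom_left[OF D X x]] _ w])
      (simp add: assocR_tel[OF D D X] x tel_car tmap_tel[OF D DX D X addhom_id rlin_id LB LBl]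
         lact_by_tel[OF D X \<epsilon>a \<epsilon>r] ract_by_tel[OF D D \<epsilon>a \<epsilon>l] tel_bal[OF D X])
  show ?thesis
    by (rule tens_ext[OF D X abgrp_tens addhom_comp[OF coactL_addhom TM] addhom_id _ u])
      (simp add: coactL_tel inner \<Delta>car cuR)
qed

end

end


lemma tel_llin_left: "bimodule M \<Longrightarrow> bimodule N \<Longrightarrow> n \<in> bm_car N \<Longrightarrow>
  llin M (tens M N) (\<lambda>m. tel M N m n)"
  unfolding llin_def by (simp add: tens_lact_tel)

context corg
begin

lemma coassoc:
  fixes X :: "('b, 'x, 'a::ring_1) bimod"
  assumes X: "bimodule X" and u: "u \<in> bm_car (tens D X)"
  shows "coactL D \<Delta> (tens D X) (coactL D \<Delta> X u)
       = tmap D (tens D (tens D X)) (\<lambda>x. x) (coactL D \<Delta> X) (coactL D \<Delta> X u)"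
proof -
  note DX = bimodule_tens[OF D X]
  note DDX = bimodule_tens[OF D DX]
  note coass' = coass[unfolded id_def]
  define \<Theta> where "\<Theta> x y = assocR D D (tens D X) (tmap (tens D D) (tens D X) (\<lambda>x. x) (\<lambda>c. tel D X c x) y)" for x y
  define h where "h x v = assocR D D X (tel (tens D D) X v x)" for x v
  define \<Theta>' where "\<Theta>' x y = tmap D (tens D (tens D X)) (\<lambda>x. x) (h x) y" for x y
  have ga: "addhom D (tens D X) (\<lambda>c. tel D X c x)" and gl: "llin D (tens D X) (\<lambda>c. tel D X c x)"
    if x: "x \<in> bm_car X" for x
    using tel_addhom_left[OF D X x] tel_llin_left[OF D X x] by auto
  have \<Theta>a: "addhom (tens (tens D D) D) (tens D (tens D (tens D X))) (\<Theta> x)" if x: "x \<in> bm_car X" for x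
    unfolding \<Theta>_def[abs_def]
    by (rule addhom_comp[OF tmap_addhom[OF DD D DD DX addhom_id rlin_id ga[OF x] gl[OF x]] assocR_addhom[OF D D DX]])
  have ha: "addhom (tens D D) (tens D (tens D X)) (h x)" and hl: "llin (tens D D) (tens D (tens D X)) (h x)"
    if x: "x \<in> bm_car X" for x
    unfolding h_def[abs_def]
    using addhom_comp[OF tel_addhom_left[OF DD X x] assocR_addhom[OF D D X]]
      llin_comp[OF tel_addhom_left[OF DD X x] tel_llin_left[OF DD X x] assocR_llin[OF D D X]] by auto
  have \<Theta>'a: "addhom (tens D (tens D D)) (tens D (tens D (tens D X))) (\<Theta>' x)" if x: "x \<in> bm_car X" for x
    unfolding \<Theta>'_def[abs_def]
    by (rule tmap_addhom[OF D DD D DDX addhom_id rlin_id ha[OF x] hl[OF x]])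
  note T\<Delta>1 = tmap_addhom[OF D D DD D \<Delta>a \<Delta>r addhom_id llin_id]
  note T\<Delta>2 = tmap_addhom[OF D D D DD addhom_id rlin_id \<Delta>a \<Delta>l]
  note TL = tmap_addhom[OF D DX D DDX addhom_id rlin_id coactL_addhom[OF X] coactL_llin[OF X]]
  have A: "coactL D \<Delta> (tens D X) (assocR D D X (tel (tens D D) X w x)) = \<Theta> x (tmap (tens D D) D \<Delta> (\<lambda>x. x) w)"
    if w: "w \<in> bm_car (tens D D)" and x: "x \<in> bm_car X" for w x
    by (rule tens_ext[OF D D abgrp_tens
          addhom_comp[OF addhom_comp[OF tel_addhom_left[OF DD X x] assocR_addhom[OF D D X]] coactL_addhom[OF DX]]
          addhom_comp[OF T\<Delta>1 \<Theta>a[OF x]] _ w])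
      (simp add: assocR_tel[OF D D X] x tel_car coactL_tel[OF DX] tmap_tel[OF D D DD D \<Delta>a \<Delta>r addhom_id llin_id]
        \<Theta>_def tmap_tel[OF DD D DD DX addhom_id rlin_id ga[OF x] gl[OF x], simplified] \<Delta>car)
  have B: "tmap D (tens D (tens D X)) (\<lambda>x. x) (coactL D \<Delta> X) (assocR D D X (tel (tens D D) X w x))
       = \<Theta>' x (tmap D (tens D D) (\<lambda>x. x) \<Delta> w)"
    if w: "w \<in> bm_car (tens D D)" and x: "x \<in> bm_car X" for w x
    by (rule tens_ext[OF D D abgrp_tens
          addhom_comp[OF addhom_comp[OF tel_addhom_left[OF DD X x] assocR_addhom[OF D D X]] TL]
          addhom_comp[OF T\<Delta>2 \<Theta>'a[OF x]] _ w])
      (simp add: assocR_tel[OF D D X] x tel_car tmap_tel[OF D DX D DDX addhom_id rlin_id coactL_addhom[OF X] coactL_llin[OF X]]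
        coactL_tel[OF X] tmap_tel[OF D D D DD addhom_id rlin_id \<Delta>a \<Delta>l] \<Theta>'_def
        tmap_tel[OF D DD D DDX addhom_id rlin_id ha[OF x] hl[OF x]] \<Delta>car h_def)
  have C: "\<Theta> x y = \<Theta>' x (assocR D D D y)"
    if y: "y \<in> bm_car (tens (tens D D) D)" and x: "x \<in> bm_car X" for y x
    by (rule tens_ext2L[OF D D D abgrp_tens \<Theta>a[OF x] addhom_comp[OF assocR_addhom[OF D D D] \<Theta>'a[OF x]] _ y])
      (simp add: \<Theta>_def \<Theta>'_def h_def x tel_car tmap_tel[OF DD D DD DX addhom_id rlin_id ga[OF x] gl[OF x]]
        assocR_tel[OF D D DX] assocR_tel[OF D D D] tmap_tel[OF D DD D DDX addhom_id rlin_id ha[OF x] hl[OF x]]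
        assocR_tel[OF D D X])
  show ?thesis
  proof (rule tens_ext[OF D X abgrp_tens addhom_comp[OF coactL_addhom[OF X] coactL_addhom[OF DX]]
          addhom_comp[OF coactL_addhom[OF X] TL] _ u])
    fix d x assume d: "d \<in> bm_car D" and x: "x \<in> bm_car X"
    have t1: "tmap (tens D D) D \<Delta> (\<lambda>x. x) (\<Delta> d) \<in> bm_car (tens (tens D D) D)"
      by (rule addhomD1[OF T\<Delta>1 \<Delta>car[OF d]])
    have "coactL D \<Delta> (tens D X) (coactL D \<Delta> X (tel D X d x)) = \<Theta> x (tmap (tens D D) D \<Delta> (\<lambda>x. x) (\<Delta> d))"
      by (simp add: coactL_tel[OF X d x] A[OF \<Delta>car[OF d] x])
    also have "\<dots> = \<Theta>' x (tmap D (tens D D) (\<lambda>x. x) \<Delta> (\<Delta> d))"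
      by (simp add: C[OF t1 x] coass'[OF d])
    also have "\<dots> = tmap D (tens D (tens D X)) (\<lambda>x. x) (coactL D \<Delta> X) (coactL D \<Delta> X (tel D X d x))"
      by (simp add: coactL_tel[OF X d x] B[OF \<Delta>car[OF d] x])
    finally show "coactL D \<Delta> (tens D X) (coactL D \<Delta> X (tel D X d x)) =
      tmap D (tens D (tens D X)) (\<lambda>x. x) (coactL D \<Delta> X) (coactL D \<Delta> X (tel D X d x))" .
  qed
qed

lemma coactL_nat:
  fixes Y :: "('b, 'y, 'a::ring_1) bimod" and Z :: "('b, 'z, 'a) bimod"
  assumes Y: "bimodule Y" and Z: "bimodule Z" and aa: "addhom Y Z a" and al: "llin Y Z a"
    and y: "y \<in> bm_car (tens D Y)"
  shows "coactL D \<Delta> Z (tmap D Z (\<lambda>x. x) a y)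
       = tmap D (tens D Z) (\<lambda>x. x) (tmap D Z (\<lambda>x. x) a) (coactL D \<Delta> Y y)"
proof -
  note DY = bimodule_tens[OF D Y]
  note DZ = bimodule_tens[OF D Z]
  note Ta = tmap_addhom[OF D Y D Z addhom_id rlin_id aa al]
  note Tl = tmap_llin[OF D Y D Z addhom_id rlin_id llin_id aa al]
  note TT = tmap_addhom[OF D DY D DZ addhom_id rlin_id Ta Tl]
  have inner: "assocR D D Z (tel (tens D D) Z w (a y0))
      = tmap D (tens D Z) (\<lambda>x. x) (tmap D Z (\<lambda>x. x) a) (assocR D D Y (tel (tens D D) Y w y0))"
    if w: "w \<in> bm_car (tens D D)" and y0: "y0 \<in> bm_car Y" for w y0
    by (rule tens_ext[OF D D abgrp_tens
          addhom_comp[OF tel_addhom_left[OF DD Z addhomD1[OF aa y0]] assocR_addhom[OF D D Z]]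
          addhom_comp[OF addhom_comp[OF tel_addhom_left[OF DD Y y0] assocR_addhom[OF D D Y]] TT] _ w])
      (simp add: assocR_tel[OF D D Z] assocR_tel[OF D D Y] y0 addhomD1[OF aa] tel_car
         tmap_tel[OF D DY D DZ addhom_id rlin_id Ta Tl] tmap_tel[OF D Y D Z addhom_id rlin_id aa al])
  show ?thesis
  proof (rule tens_ext[OF D Y abgrp_tens addhom_comp[OF Ta coactL_addhom[OF Z]]
          addhom_comp[OF coactL_addhom[OF Y] TT] _ y])
    fix d y0 assume d: "d \<in> bm_car D" and y0: "y0 \<in> bm_car Y"
    have 1: "tmap D Z (\<lambda>x. x) a (tel D Y d y0) = tel D Z d (a y0)"
      by (rule tmap_tel[OF D Y D Z addhom_id rlin_id aa al d y0])
    show "coactL D \<Delta> Z (tmap D Z (\<lambda>x. x) a (tel D Y d y0)) =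
      tmap D (tens D Z) (\<lambda>x. x) (tmap D Z (\<lambda>x. x) a) (coactL D \<Delta> Y (tel D Y d y0))"
      unfolding 1 coactL_tel[OF Z d addhomD1[OF aa y0]] coactL_tel[OF Y d y0]
      by (rule inner[OF \<Delta>car[OF d] y0])
  qed
qed

lemma lact_by_nat:
  fixes Y :: "('b, 'y, 'a::ring_1) bimod" and Z :: "('b, 'z, 'a) bimod"
  assumes Y: "bimodule Y" and Z: "bimodule Z" and ga: "addhom Y Z g" and gl: "llin Y Z g"
    and v: "v \<in> bm_car (tens D Y)"
  shows "lact_by Z \<epsilon> (tmap D Z (\<lambda>x. x) g v) = g (lact_by Y \<epsilon> v)"
  by (rule tens_ext[OF D Y bimodule_abgrp[OF Z]
        addhom_comp[OF tmap_addhom[OF D Y D Z addhom_id rlin_id ga gl] lact_by_addhom[OF D Z \<epsilon>a \<epsilon>r]]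
        addhom_comp[OF lact_by_addhom[OF D Y \<epsilon>a \<epsilon>r] ga] _ v])
    (simp add: tmap_tel[OF D Y D Z addhom_id rlin_id ga gl] lact_by_tel[OF D Z \<epsilon>a \<epsilon>r]
      lact_by_tel[OF D Y \<epsilon>a \<epsilon>r] addhomD1[OF ga] llinD[OF gl])

lemma psi_assocL:
  fixes T :: "('b, 't, 'a::ring_1) bimod" and C :: "('a, 'c, 'y::ring_1) bimod"
  assumes T: "bimodule T" and C: "bimodule C" and v: "v \<in> bm_car (tens D (tens T C))"
  shows "tmap T C (lact_by T \<epsilon>) (\<lambda>x. x) (assocL D T C v) = lact_by (tens T C) \<epsilon> v"
proof -
  note DT = bimodule_tens[OF D T]
  note LBa = lact_by_addhom[OF D T \<epsilon>a \<epsilon>r]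
  note LBr = lact_by_rlin[OF D T \<epsilon>a \<epsilon>r]
  show ?thesis
    by (rule tens_ext2R[OF D T C bimodule_abgrp[OF bimodule_tens[OF T C]]
          addhom_comp[OF assocL_addhom[OF D T C] tmap_addhom[OF DT C T C LBa LBr addhom_id llin_id]]
          lact_by_addhom[OF D bimodule_tens[OF T C] \<epsilon>a \<epsilon>r] _ v])
      (simp add: assocL_tel[OF D T C] tmap_tel[OF DT C T C LBa LBr addhom_id llin_id] tel_car
        lact_by_tel[OF D T \<epsilon>a \<epsilon>r] lact_by_tel[OF D bimodule_tens[OF T C] \<epsilon>a \<epsilon>r] tens_lact_tel[OF T C])
qed

end


lemma bimod_hom_restrict:
  assumes M: "bimodule M" and h: "bimod_hom M N g"
  shows "bimod_hom M N (restrict g (bm_car M))"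
  using h unfolding bimod_hom_def
  by (simp add: bm_lact_car[OF M] bm_ract_car[OF M] ag_plus[OF bimodule_abgrp[OF M]])

locale corg2 = corg +
  fixes S :: "('b::ring_1, 's, 'a::ring_1) bimod" and T :: "('b, 't, 'a) bimod" and C :: "('a, 'c, 'a) bimod"
    and s :: "('d, 's) tns \<Rightarrow> ('s, 'c) tns" and t :: "('d, 't) tns \<Rightarrow> ('t, 'c) tns"
  assumes S: "bimodule S" and T: "bimodule T" and C: "bimodule C"
    and sh: "bimod_hom (tens D S) (tens S C) s" and th: "bimod_hom (tens D T) (tens T C) t"
begin

lemmas DS = bimodule_tens[OF D S]
lemmas DT = bimodule_tens[OF D T]
lemmas SC = bimodule_tens[OF S C]
lemmas TC = bimodule_tens[OF T C]
lemmas DDS = bimodule_tens[OF D DS]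
lemmas DDT = bimodule_tens[OF D DT]
lemmas DSC = bimodule_tens[OF D SC]
lemmas DTC = bimodule_tens[OF D TC]

lemma sa: "addhom (tens D S) (tens S C) s" and sl: "llin (tens D S) (tens S C) s"
  and sr: "rlin (tens D S) (tens S C) s"
  using sh by (simp_all add: bimod_hom_iff)
lemma ta: "addhom (tens D T) (tens T C) t" and tl: "llin (tens D T) (tens T C) t"
  and tr: "rlin (tens D T) (tens T C) t"
  using th by (simp_all add: bimod_hom_iff)

lemma coactR_eq: "coactR D \<Delta> S C s x = assocL D S C (tmap D (tens S C) (\<lambda>x. x) s (coactL D \<Delta> S x))"
  by (simp add: coactR_def id_def)
lemma coactR_eqT: "coactR D \<Delta> T C t x = assocL D T C (tmap D (tens T C) (\<lambda>x. x) t (coactL D \<Delta> T x))"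
  by (simp add: coactR_def id_def)

definition Ph :: "(('d, 's) tns \<Rightarrow> 't) \<Rightarrow> ('d, 's) tns \<Rightarrow> ('d, 't) tns" where
  "Ph a z = tmap D T (\<lambda>x. x) a (coactL D \<Delta> S z)"
definition Ps :: "(('d, 's) tns \<Rightarrow> 't) \<Rightarrow> ('d, ('s, 'c) tns) tns \<Rightarrow> ('t, 'c) tns" where
  "Ps a z = tmap T C a (\<lambda>x. x) (assocL D S C z)"

context
  fixes a :: "('d, 's) tns \<Rightarrow> 't"
  assumes aa: "addhom (tens D S) T a" and al: "llin (tens D S) T a" and ar: "rlin (tens D S) T a"
begin


lemma Ta: "addhom (tens D (tens D S)) (tens D T) (tmap D T (\<lambda>x. x) a)"
  by (rule tmap_addhom[OF D DS D T addhom_id rlin_id aa al])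
lemma Tl: "llin (tens D (tens D S)) (tens D T) (tmap D T (\<lambda>x. x) a)"
  by (rule tmap_llin[OF D DS D T addhom_id rlin_id llin_id aa al])
lemma Tr: "rlin (tens D (tens D S)) (tens D T) (tmap D T (\<lambda>x. x) a)"
  by (rule tmap_rlin[OF D DS D T addhom_id rlin_id aa al ar])

lemma Ph_a: "addhom (tens D S) (tens D T) (Ph a)"
  unfolding Ph_def[abs_def] by (rule addhom_comp[OF coactL_addhom[OF S] Ta])
lemma Ph_l: "llin (tens D S) (tens D T) (Ph a)"
  unfolding Ph_def[abs_def] by (rule llin_comp[OF coactL_addhom[OF S] coactL_llin[OF S] Tl])
lemma Ph_r: "rlin (tens D S) (tens D T) (Ph a)"
  unfolding Ph_def[abs_def] by (rule rlin_comp[OF coactL_addhom[OF S] coactL_rlin[OF S] Tr])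

lemma TAa: "addhom (tens (tens D S) C) (tens T C) (tmap T C a (\<lambda>x. x))"
  by (rule tmap_addhom[OF DS C T C aa ar addhom_id llin_id])
lemma TAl: "llin (tens (tens D S) C) (tens T C) (tmap T C a (\<lambda>x. x))"
  by (rule tmap_llin[OF DS C T C aa ar al addhom_id llin_id])

lemma Ps_a: "addhom (tens D (tens S C)) (tens T C) (Ps a)"
  unfolding Ps_def[abs_def] by (rule addhom_comp[OF assocL_addhom[OF D S C] TAa])
lemma Ps_l: "llin (tens D (tens S C)) (tens T C) (Ps a)"
  unfolding Ps_def[abs_def] by (rule llin_comp[OF assocL_addhom[OF D S C] assocL_llin[OF D S C] TAl])

lemma C9:
  assumes v: "v \<in> bm_car (tens D (tens S C))"
  shows "tmap (tens D T) C (Ph a) (\<lambda>x. x) (assocL D S C v)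
    = assocL D T C (tmap D (tens T C) (\<lambda>x. x) (Ps a)
        (assocR D D (tens S C) (tmap (tens D D) (tens S C) \<Delta> (\<lambda>x. x) v)))"
proof -
  note TPh = tmap_addhom[OF DS C DT C Ph_a Ph_r addhom_id llin_id]
  note TD = tmap_addhom[OF D SC DD SC \<Delta>a \<Delta>r addhom_id llin_id]
  note TPs = tmap_addhom[OF D DSC D TC addhom_id rlin_id Ps_a Ps_l]
  have inner: "tel (tens D T) C (tmap D T (\<lambda>x. x) a (assocR D D S (tel (tens D D) S w \<sigma>))) c
     = assocL D T C (tmap D (tens T C) (\<lambda>x. x) (Ps a) (assocR D D (tens S C) (tel (tens D D) (tens S C) w (tel S C \<sigma> c))))"
    if w: "w \<in> bm_car (tens D D)" and \<sigma>: "\<sigma> \<in> bm_car S" and c: "c \<in> bm_car C" for w \<sigma> c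
    by (rule tens_ext[OF D D abgrp_tens
         addhom_comp[OF addhom_comp[OF addhom_comp[OF tel_addhom_left[OF DD S \<sigma>] assocR_addhom[OF D D S]] Ta]
            tel_addhom_left[OF DT C c]]
         addhom_comp[OF addhom_comp[OF addhom_comp[OF tel_addhom_left[OF DD SC tel_car[OF \<sigma> c]]
            assocR_addhom[OF D D SC]] TPs] assocL_addhom[OF D T C]] _ w])
      (simp add: \<sigma> c tel_car assocR_tel[OF D D S] assocR_tel[OF D D SC]
         tmap_tel[OF D DS D T addhom_id rlin_id aa al] tmap_tel[OF D DSC D TC addhom_id rlin_id Ps_a Ps_l]
         Ps_def assocL_tel[OF D S C] tmap_tel[OF DS C T C aa ar addhom_id llin_id] addhomD1[OF aa]
         assocL_tel[OF D T C])
  show ?thesis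
    by (rule tens_ext2R[OF D S C abgrp_tens addhom_comp[OF assocL_addhom[OF D S C] TPh]
          addhom_comp[OF addhom_comp[OF addhom_comp[OF TD assocR_addhom[OF D D SC]] TPs] assocL_addhom[OF D T C]] _ v])
      (simp add: assocL_tel[OF D S C] tel_car tmap_tel[OF DS C DT C Ph_a Ph_r addhom_id llin_id]
        Ph_def coactL_tel[OF S] tmap_tel[OF D SC DD SC \<Delta>a \<Delta>r addhom_id llin_id] \<Delta>car inner)
qed

end

end

context corg2
begin

lemma coactR_car: "x \<in> bm_car (tens D S) \<Longrightarrow> coactR D \<Delta> S C s x \<in> bm_car (tens (tens D S) C)"
  unfolding coactR_eq
  by (rule assocL_car[OF D S C tmap_car[OF D DS D SC addhom_id rlin_id sa sl coactL_car[OF S]]])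

lemma P2: "y \<in> bm_car (tens D T) \<Longrightarrow> tmap T C (lact_by T \<epsilon>) (\<lambda>x. x) (coactR D \<Delta> T C t y) = t y"
  unfolding coactR_eqT
  by (simp add: psi_assocL[OF T C] tmap_car[OF D DT D TC addhom_id rlin_id ta tl] coactL_car[OF T]
      lact_by_nat[OF DT TC ta tl] counitL[OF T])

lemma cellPhi_eq: "x \<in> bm_car (tens D S) \<Longrightarrow> cellPhi D \<Delta> S T a x = tmap D T (\<lambda>x. x) a (coactL D \<Delta> S x)"
  by (simp add: cellPhi_def id_def)

lemma cellPhi_Ph: "cellPhi D \<Delta> S T a = restrict (Ph a) (bm_car (tens D S))"
  by (simp add: cellPhi_def id_def Ph_def[abs_def])

lemma twocellsD:
  assumes "a \<in> twocells D \<Delta> C S s T t"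
  shows "a \<in> extensional (bm_car (tens D S))" "addhom (tens D S) T a" "llin (tens D S) T a" "rlin (tens D S) T a"
    "\<And>x. x \<in> bm_car (tens D S) \<Longrightarrow>
       tmap T C a (\<lambda>x. x) (coactR D \<Delta> S C s x) = t (tmap D T (\<lambda>x. x) a (coactL D \<Delta> S x))"
  using assms unfolding twocells_def id_def bimod_hom_iff by auto

lemma bicolinD:
  assumes "f \<in> bicolin D \<Delta> C S s T t"
  shows "f \<in> extensional (bm_car (tens D S))" "addhom (tens D S) (tens D T) f"
    "llin (tens D S) (tens D T) f" "rlin (tens D S) (tens D T) f"
    "\<And>x. x \<in> bm_car (tens D S) \<Longrightarrow>
       coactL D \<Delta> T (f x) = tmap D (tens D T) (\<lambda>x. x) f (coactL D \<Delta> S x)"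
    "\<And>x. x \<in> bm_car (tens D S) \<Longrightarrow>
       coactR D \<Delta> T C t (f x) = tmap (tens D T) C f (\<lambda>x. x) (coactR D \<Delta> S C s x)"
  using assms unfolding bicolin_def id_def bimod_hom_iff by auto

lemma G3:
  assumes a: "a \<in> twocells D \<Delta> C S s T t"
  shows "cellPsi D \<epsilon> S T (cellPhi D \<Delta> S T a) = a"
  unfolding cellPsi_def
proof (rule extensionalityI[OF restrict_extensional twocellsD(1)[OF a]])
  fix x assume x: "x \<in> bm_car (tens D S)"
  show "restrict (\<lambda>x. lact_by T \<epsilon> (cellPhi D \<Delta> S T a x)) (bm_car (tens D S)) x = a x"
    using x
    by (simp add: cellPhi_eq lact_by_nat[OF DS T twocellsD(2,3)[OF a]] coactL_car[OF S] counitL[OF S])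
qed

lemma G2:
  assumes fb: "f \<in> bicolin D \<Delta> C S s T t"
  shows "cellPhi D \<Delta> S T (cellPsi D \<epsilon> S T f) = f"
    and "cellPsi D \<epsilon> S T f \<in> twocells D \<Delta> C S s T t"
proof -
  note fe = bicolinD(1)[OF fb] and fa = bicolinD(2)[OF fb] and fl = bicolinD(3)[OF fb]
    and fr = bicolinD(4)[OF fb] and fL = bicolinD(5)[OF fb] and fR = bicolinD(6)[OF fb]
  note LBa = lact_by_addhom[OF D T \<epsilon>a \<epsilon>r]
  note LBl = lact_by_llin[OF D T \<epsilon>a \<epsilon>r \<epsilon>l]
  note LBr = lact_by_rlin[OF D T \<epsilon>a \<epsilon>r]
  define Psi where "Psi = cellPsi D \<epsilon> S T f"
  have Psi_x: "Psi x = lact_by T \<epsilon> (f x)" if "x \<in> bm_car (tens D S)" for x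
    using that by (simp add: Psi_def cellPsi_def)
  have A: "cellPhi D \<Delta> S T Psi x = f x" if x: "x \<in> bm_car (tens D S)" for x
  proof -
    have Lx: "coactL D \<Delta> S x \<in> bm_car (tens D (tens D S))" by (rule coactL_car[OF S x])
    have "cellPhi D \<Delta> S T Psi x = tmap D T (\<lambda>x. x) Psi (coactL D \<Delta> S x)"
      by (rule cellPhi_eq[OF x])
    also have "\<dots> = tmap D T (\<lambda>x. x) (\<lambda>y. lact_by T \<epsilon> (f y)) (coactL D \<Delta> S x)"
      by (rule tmap_cong[OF Lx]) (simp_all add: Psi_x)
    also have "\<dots> = tmap D T (\<lambda>x. x) (lact_by T \<epsilon>) (tmap D (tens D T) (\<lambda>x. x) f (coactL D \<Delta> S x))"
      using tmap_comp[OF D DS D DT D T addhom_id rlin_id fa fl addhom_id rlin_id LBa LBl Lx] by simp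
    also have "\<dots> = tmap D T (\<lambda>x. x) (lact_by T \<epsilon>) (coactL D \<Delta> T (f x))"
      by (simp add: fL[OF x])
    also have "\<dots> = f x" by (rule counitR[OF T addhomD1[OF fa x]])
    finally show ?thesis .
  qed
  show "cellPhi D \<Delta> S T (cellPsi D \<epsilon> S T f) = f"
    unfolding Psi_def[symmetric]
  proof (rule extensionalityI[OF _ fe])
    show "cellPhi D \<Delta> S T Psi \<in> extensional (bm_car (tens D S))"
      unfolding cellPhi_def by (rule restrict_extensional)
  next
    fix x assume "x \<in> bm_car (tens D S)"
    then show "cellPhi D \<Delta> S T Psi x = f x" by (rule A)
  qed
  have Psih: "bimod_hom (tens D S) T Psi"
  proof -
    have "bimod_hom (tens D S) T (\<lambda>x. lact_by T \<epsilon> (f x))"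
      unfolding bimod_hom_iff
      using addhom_comp[OF fa LBa] llin_comp[OF fa fl LBl] rlin_comp[OF fa fr LBr] by auto
    then show ?thesis unfolding Psi_def cellPsi_def by (rule bimod_hom_restrict[OF DS])
  qed
  have cond: "tmap T C Psi (\<lambda>x. x) (coactR D \<Delta> S C s x) = t (tmap D T (\<lambda>x. x) Psi (coactL D \<Delta> S x))"
    if x: "x \<in> bm_car (tens D S)" for x
  proof -
    have Rx: "coactR D \<Delta> S C s x \<in> bm_car (tens (tens D S) C)" by (rule coactR_car[OF x])
    have "tmap T C Psi (\<lambda>x. x) (coactR D \<Delta> S C s x) = tmap T C (\<lambda>y. lact_by T \<epsilon> (f y)) (\<lambda>x. x) (coactR D \<Delta> S C s x)"
      by (rule tmap_cong[OF Rx]) (simp_all add: Psi_x)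
    also have "\<dots> = tmap T C (lact_by T \<epsilon>) (\<lambda>x. x) (tmap (tens D T) C f (\<lambda>x. x) (coactR D \<Delta> S C s x))"
      using tmap_comp[OF DS C DT C T C fa fr addhom_id llin_id LBa LBr addhom_id llin_id Rx] by simp
    also have "\<dots> = tmap T C (lact_by T \<epsilon>) (\<lambda>x. x) (coactR D \<Delta> T C t (f x))"
      by (simp add: fR[OF x])
    also have "\<dots> = t (f x)" by (rule P2[OF addhomD1[OF fa x]])
    also have "f x = tmap D T (\<lambda>x. x) Psi (coactL D \<Delta> S x)"
      using A[OF x] cellPhi_eq[OF x] by simp
    finally show ?thesis .
  qed
  show "cellPsi D \<epsilon> S T f \<in> twocells D \<Delta> C S s T t"
    unfolding Psi_def[symmetric] twocells_def id_def
    using Psih cond by (simp add: Psi_def cellPsi_def)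
qed

lemma colinL_Ph:
  assumes aa: "addhom (tens D S) T a" and al: "llin (tens D S) T a" and ar: "rlin (tens D S) T a"
    and x: "x \<in> bm_car (tens D S)"
  shows "coactL D \<Delta> T (Ph a x) = tmap D (tens D T) (\<lambda>x. x) (Ph a) (coactL D \<Delta> S x)"
proof -
  have Lx: "coactL D \<Delta> S x \<in> bm_car (tens D (tens D S))" by (rule coactL_car[OF S x])
  have "coactL D \<Delta> T (Ph a x) = tmap D (tens D T) (\<lambda>x. x) (tmap D T (\<lambda>x. x) a) (coactL D \<Delta> (tens D S) (coactL D \<Delta> S x))"
    unfolding Ph_def by (rule coactL_nat[OF DS T aa al Lx])
  also have "\<dots> = tmap D (tens D T) (\<lambda>x. x) (tmap D T (\<lambda>x. x) a)
      (tmap D (tens D (tens D S)) (\<lambda>x. x) (coactL D \<Delta> S) (coactL D \<Delta> S x))"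
    by (simp add: coassoc[OF S x])
  also have "\<dots> = tmap D (tens D T) (\<lambda>x. x) (Ph a) (coactL D \<Delta> S x)"
    using tmap_comp[OF D DS D DDS D DT addhom_id rlin_id coactL_addhom[OF S] coactL_llin[OF S]
        addhom_id rlin_id Ta[OF aa al ar] Tl[OF aa al ar] Lx]
    by (simp add: Ph_def[abs_def])
  finally show ?thesis .
qed

lemma G1:
  assumes ab: "a \<in> twocells D \<Delta> C S s T t"
  shows "cellPhi D \<Delta> S T a \<in> bicolin D \<Delta> C S s T t"
proof -
  note ae = twocellsD(1)[OF ab] and aa = twocellsD(2)[OF ab] and al = twocellsD(3)[OF ab]
    and ar = twocellsD(4)[OF ab] and acond = twocellsD(5)[OF ab]
  note PA = Ph_a[OF aa al ar] and PL = Ph_l[OF aa al ar] and PR = Ph_r[OF aa al ar]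
  have hom: "bimod_hom (tens D S) (tens D T) (cellPhi D \<Delta> S T a)"
    unfolding cellPhi_Ph
    by (rule bimod_hom_restrict[OF DS]) (simp add: bimod_hom_iff PA PL PR)
  have L: "coactL D \<Delta> T (cellPhi D \<Delta> S T a x) = tmap D (tens D T) (\<lambda>x. x) (cellPhi D \<Delta> S T a) (coactL D \<Delta> S x)"
    if x: "x \<in> bm_car (tens D S)" for x
  proof -
    have "tmap D (tens D T) (\<lambda>x. x) (cellPhi D \<Delta> S T a) (coactL D \<Delta> S x)
        = tmap D (tens D T) (\<lambda>x. x) (Ph a) (coactL D \<Delta> S x)"
      by (rule tmap_cong[OF coactL_car[OF S x]]) (simp_all add: cellPhi_Ph)
    then show ?thesis using colinL_Ph[OF aa al ar x] by (simp add: cellPhi_Ph x)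
  qed
  have R: "coactR D \<Delta> T C t (cellPhi D \<Delta> S T a x) = tmap (tens D T) C (cellPhi D \<Delta> S T a) (\<lambda>x. x) (coactR D \<Delta> S C s x)"
    if x: "x \<in> bm_car (tens D S)" for x
  proof -
    define y where "y = coactL D \<Delta> S x"
    have y: "y \<in> bm_car (tens D (tens D S))" unfolding y_def by (rule coactL_car[OF S x])
    note TSa = tmap_addhom[OF D DS D SC addhom_id rlin_id sa sl]
    note TSl = tmap_llin[OF D DS D SC addhom_id rlin_id llin_id sa sl]
    have ycar2: "tmap (tens D D) (tens D S) \<Delta> (\<lambda>x. x) y \<in> bm_car (tens (tens D D) (tens D S))"
      by (rule tmap_car[OF D DS DD DS \<Delta>a \<Delta>r addhom_id llin_id y])
    have vcar: "tmap D (tens S C) (\<lambda>x. x) s y \<in> bm_car (tens D (tens S C))"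
      by (rule tmap_car[OF D DS D SC addhom_id rlin_id sa sl y])
    have "coactR D \<Delta> T C t (cellPhi D \<Delta> S T a x) = assocL D T C (tmap D (tens T C) (\<lambda>x. x) t
        (tmap D (tens D T) (\<lambda>x. x) (Ph a) y))"
      by (simp add: coactR_eqT cellPhi_Ph x colinL_Ph[OF aa al ar x] y_def)
    also have "\<dots> = assocL D T C (tmap D (tens T C) (\<lambda>x. x) (\<lambda>z. t (Ph a z)) y)"
      using tmap_comp[OF D DS D DT D TC addhom_id rlin_id PA PL addhom_id rlin_id ta tl y] by simp
    also have "\<dots> = assocL D T C (tmap D (tens T C) (\<lambda>x. x) (\<lambda>z. tmap T C a (\<lambda>x. x) (coactR D \<Delta> S C s z)) y)"
      by (rule arg_cong[where f="assocL D T C"], rule tmap_cong[OF y]) (simp_all add: Ph_def acond)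
    finally have lhs: "coactR D \<Delta> T C t (cellPhi D \<Delta> S T a x) =
        assocL D T C (tmap D (tens T C) (\<lambda>x. x) (\<lambda>z. tmap T C a (\<lambda>x. x) (coactR D \<Delta> S C s z)) y)" .
    have "tmap (tens D T) C (cellPhi D \<Delta> S T a) (\<lambda>x. x) (coactR D \<Delta> S C s x)
        = tmap (tens D T) C (Ph a) (\<lambda>x. x) (coactR D \<Delta> S C s x)"
      by (rule tmap_cong[OF coactR_car[OF x]]) (simp_all add: cellPhi_Ph)
    also have "\<dots> = tmap (tens D T) C (Ph a) (\<lambda>x. x) (assocL D S C (tmap D (tens S C) (\<lambda>x. x) s y))"
      by (simp add: coactR_eq y_def)
    also have "\<dots> = assocL D T C (tmap D (tens T C) (\<lambda>x. x) (Ps a)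
        (assocR D D (tens S C) (tmap (tens D D) (tens S C) \<Delta> (\<lambda>x. x) (tmap D (tens S C) (\<lambda>x. x) s y))))"
      by (rule C9[OF aa al ar vcar])
    also have "tmap (tens D D) (tens S C) \<Delta> (\<lambda>x. x) (tmap D (tens S C) (\<lambda>x. x) s y)
        = tmap (tens D D) (tens S C) (\<lambda>x. x) s (tmap (tens D D) (tens D S) \<Delta> (\<lambda>x. x) y)"
      using tmap_comp[OF D DS D SC DD SC addhom_id rlin_id sa sl \<Delta>a \<Delta>r addhom_id llin_id y]
        tmap_comp[OF D DS DD DS DD SC \<Delta>a \<Delta>r addhom_id llin_id addhom_id rlin_id sa sl y]
      by simp
    also have "assocR D D (tens S C) (tmap (tens D D) (tens S C) (\<lambda>x. x) s (tmap (tens D D) (tens D S) \<Delta> (\<lambda>x. x) y))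
        = tmap D (tens D (tens S C)) (\<lambda>x. x) (tmap D (tens S C) (\<lambda>x. x) s)
            (assocR D D (tens D S) (tmap (tens D D) (tens D S) \<Delta> (\<lambda>x. x) y))"
      by (rule assocR_nat3[OF D D DS SC sa sl ycar2])
    also have "assocR D D (tens D S) (tmap (tens D D) (tens D S) \<Delta> (\<lambda>x. x) y)
        = tmap D (tens D (tens D S)) (\<lambda>x. x) (coactL D \<Delta> S) y"
      unfolding coactL_eq[symmetric] y_def by (rule coassoc[OF S x])
    also have "tmap D (tens D (tens S C)) (\<lambda>x. x) (tmap D (tens S C) (\<lambda>x. x) s)
        (tmap D (tens D (tens D S)) (\<lambda>x. x) (coactL D \<Delta> S) y)
        = tmap D (tens D (tens S C)) (\<lambda>x. x) (\<lambda>z. tmap D (tens S C) (\<lambda>x. x) s (coactL D \<Delta> S z)) y"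
      using tmap_comp[OF D DS D DDS D DSC addhom_id rlin_id coactL_addhom[OF S] coactL_llin[OF S]
          addhom_id rlin_id TSa TSl y] by simp
    also have "tmap D (tens T C) (\<lambda>x. x) (Ps a)
        (tmap D (tens D (tens S C)) (\<lambda>x. x) (\<lambda>z. tmap D (tens S C) (\<lambda>x. x) s (coactL D \<Delta> S z)) y)
        = tmap D (tens T C) (\<lambda>x. x) (\<lambda>z. Ps a (tmap D (tens S C) (\<lambda>x. x) s (coactL D \<Delta> S z))) y"
      using tmap_comp[OF D DS D DSC D TC addhom_id rlin_id addhom_comp[OF coactL_addhom[OF S] TSa]
          llin_comp[OF coactL_addhom[OF S] coactL_llin[OF S] TSl] addhom_id rlin_id
          Ps_a[OF aa al ar] Ps_l[OF aa al ar] y] by simp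
    also have "(\<lambda>z. Ps a (tmap D (tens S C) (\<lambda>x. x) s (coactL D \<Delta> S z)))
        = (\<lambda>z. tmap T C a (\<lambda>x. x) (coactR D \<Delta> S C s z))"
      by (simp add: Ps_def coactR_eq)
    finally have rhs: "tmap (tens D T) C (cellPhi D \<Delta> S T a) (\<lambda>x. x) (coactR D \<Delta> S C s x)
      = assocL D T C (tmap D (tens T C) (\<lambda>x. x) (\<lambda>z. tmap T C a (\<lambda>x. x) (coactR D \<Delta> S C s z)) y)" .
    show ?thesis using lhs rhs by simp
  qed
  show ?thesis
    unfolding bicolin_def id_def
    using hom L R by (simp add: cellPhi_def)
qed

end

lemma corg2I:
  fixes \<iota>A :: "'k::comm_ring_1 \<Rightarrow> 'a::ring_1" and \<iota>B :: "'k \<Rightarrow> 'b::ring_1"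
    and C :: "('a, 'c, 'a) bimod" and \<Delta>C :: "'c \<Rightarrow> ('c, 'c) tns" and \<epsilon>C :: "'c \<Rightarrow> 'a"
    and D :: "('b, 'd, 'b) bimod" and \<Delta>D :: "'d \<Rightarrow> ('d, 'd) tns" and \<epsilon>D :: "'d \<Rightarrow> 'b"
    and S :: "('b, 's, 'a) bimod" and s :: "('d, 's) tns \<Rightarrow> ('s, 'c) tns"
    and T :: "('b, 't, 'a) bimod" and t :: "('d, 't) tns \<Rightarrow> ('t, 'c) tns"
  assumes cC: "coring \<iota>A C \<Delta>C \<epsilon>C" and cD: "coring \<iota>B D \<Delta>D \<epsilon>D"
    and kS: "kbimod \<iota>B \<iota>A S" and kT: "kbimod \<iota>B \<iota>A T"
    and oS: "onecell D \<Delta>D \<epsilon>D C \<Delta>C \<epsilon>C S s"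
    and oT: "onecell D \<Delta>D \<epsilon>D C \<Delta>C \<epsilon>C T t"
  shows "corg2 D \<Delta>D \<epsilon>D S T C s t"
proof -
  have cD': "kbimod \<iota>B \<iota>B D" "bimod_hom D (tens D D) \<Delta>D" "bimod_hom D ringmod \<epsilon>D"
    "\<forall>c\<in>bm_car D. tmap D (tens D D) id \<Delta>D (\<Delta>D c) = assocR D D D (tmap (tens D D) D \<Delta>D id (\<Delta>D c))"
    "\<forall>c\<in>bm_car D. lact_by D \<epsilon>D (\<Delta>D c) = c"
    "\<forall>c\<in>bm_car D. ract_by D \<epsilon>D (\<Delta>D c) = c"
    using cD unfolding coring_def by auto
  have C: "bimodule C" using cC unfolding coring_def kbimod_def by (elim conjE)
  have D: "bimodule D" using cD'(1) unfolding kbimod_def by (elim conjE)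
  have S: "bimodule S" using kS unfolding kbimod_def by (elim conjE)
  have T: "bimodule T" using kT unfolding kbimod_def by (elim conjE)
  have sh: "bimod_hom (tens D S) (tens S C) s" using oS unfolding onecell_def by (elim conjE)
  have th: "bimod_hom (tens D T) (tens T C) t" using oT unfolding onecell_def by (elim conjE)
  show ?thesis
    by (intro corg2.intro corg.intro corg2_axioms.intro D cD'(2,3) C S T sh th)
      (use cD'(4-6) in auto)
qed

theorem proposition2p2:
  fixes \<iota>A :: "'k::comm_ring_1 \<Rightarrow> 'a::ring_1" and \<iota>B :: "'k \<Rightarrow> 'b::ring_1"
    and C :: "('a, 'c, 'a) bimod" and \<Delta>C :: "'c \<Rightarrow> ('c, 'c) tns" and \<epsilon>C :: "'c \<Rightarrow> 'a"
    and D :: "('b, 'd, 'b) bimod" and \<Delta>D :: "'d \<Rightarrow> ('d, 'd) tns" and \<epsilon>D :: "'d \<Rightarrow> 'b"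
    and S :: "('b, 's, 'a) bimod" and s :: "('d, 's) tns \<Rightarrow> ('s, 'c) tns"
    and T :: "('b, 't, 'a) bimod" and t :: "('d, 't) tns \<Rightarrow> ('t, 'c) tns"
  assumes "kalgebra \<iota>A" and "kalgebra \<iota>B"
    and "coring \<iota>A C \<Delta>C \<epsilon>C" and "coring \<iota>B D \<Delta>D \<epsilon>D"
    and "kbimod \<iota>B \<iota>A S" and "kbimod \<iota>B \<iota>A T"
    and "onecell D \<Delta>D \<epsilon>D C \<Delta>C \<epsilon>C S s"
    and "onecell D \<Delta>D \<epsilon>D C \<Delta>C \<epsilon>C T t"
  shows "bij_betw (cellPhi D \<Delta>D S T) (twocells D \<Delta>D C S s T t) (bicolin D \<Delta>D C S s T t)
    \<and> (\<forall>f\<in>bicolin D \<Delta>D C S s T t.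
          cellPsi D \<epsilon>D S T f \<in> twocells D \<Delta>D C S s T t
        \<and> cellPhi D \<Delta>D S T (cellPsi D \<epsilon>D S T f) = f)"
proof -
  have L: "corg2 D \<Delta>D \<epsilon>D S T C s t"
    by (rule corg2I[OF assms(3,4,5,6,7,8)])
  have G1: "\<And>a. a \<in> twocells D \<Delta>D C S s T t \<Longrightarrow> cellPhi D \<Delta>D S T a \<in> bicolin D \<Delta>D C S s T t"
    by (rule corg2.G1[OF L])
  have G2a: "\<And>f. f \<in> bicolin D \<Delta>D C S s T t \<Longrightarrow> cellPhi D \<Delta>D S T (cellPsi D \<epsilon>D S T f) = f"
    by (rule corg2.G2(1)[OF L])
  have G2b: "\<And>f. f \<in> bicolin D \<Delta>D C S s T t \<Longrightarrow> cellPsi D \<epsilon>D S T f \<in> twocells D \<Delta>D C S s T t"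
    by (rule corg2.G2(2)[OF L])
  have G3: "\<And>a. a \<in> twocells D \<Delta>D C S s T t \<Longrightarrow> cellPsi D \<epsilon>D S T (cellPhi D \<Delta>D S T a) = a"
    by (rule corg2.G3[OF L])
  have "bij_betw (cellPhi D \<Delta>D S T) (twocells D \<Delta>D C S s T t) (bicolin D \<Delta>D C S s T t)"
    by (rule bij_betw_byWitness[where f'="cellPsi D \<epsilon>D S T"]) (use G1 G2a G2b G3 in auto)
  then show ?thesis using G2a G2b by blast
qed

end
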